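(* Under the standing assumptions, let $v$ be a vertex of degree $8$ in $G$. If there is a vertex $w$ of degree $3$ such that the edge $vw$ lies on two $3$-faces, then $v$ has no neighbour of degree $2$.
   Context: Standing assumptions: A total $9$-coloring of a graph is an assignment of colors from $\{1,\dots,9\}$ to the vertices and edges such that adjacent vertices, edges sharing an endpoint, and a vertex and an incident edge receive different colors. A $4$-fan is the graph on six vertices $c,u_1,\dots,u_5$ with edges $cu_j$ ($1\le j\le5$) and $u_ju_{j+1}$ ($1\le j\le4$). $G$ is a minimal counterexample: $G$ is a simple planar graph with maximum degree $8$, containing no subgraph isomorphic to a $4$-fan, that has no total $9$-coloring, and such that every simple planar graph $H$ with maximum degree at most $8$, no subgraph isomorphic to a $4$-fan, and $|V(H)|+|E(H)|<|V(G)|+|E(G)|$ has a total $9$-coloring. $G$ is considered with a fixed plane embedding; a $3$-face is a face of length $3$. *)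

theory Defs
  imports Main
begin

definition simple_graph :: "'a set \<Rightarrow> 'a set set \<Rightarrow> bool" where
  "simple_graph V E \<longleftrightarrow> finite V \<and>
     (\<forall>e\<in>E. \<exists>x y. e = {x, y} \<and> x \<noteq> y \<and> x \<in> V \<and> y \<in> V)"

definition neighbours :: "'a set \<Rightarrow> 'a set set \<Rightarrow> 'a \<Rightarrow> 'a set" where
  "neighbours V E v = {u \<in> V. u \<noteq> v \<and> {u, v} \<in> E}"

definition degree :: "'a set \<Rightarrow> 'a set set \<Rightarrow> 'a \<Rightarrow> nat" where
  "degree V E v = card (neighbours V E v)"

definition max_degree_le :: "'a set \<Rightarrow> 'a set set \<Rightarrow> nat \<Rightarrow> bool" where
  "max_degree_le V E k \<longleftrightarrow> (\<forall>v\<in>V. degree V E v \<le> k)"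

definition max_degree_eq :: "'a set \<Rightarrow> 'a set set \<Rightarrow> nat \<Rightarrow> bool" where
  "max_degree_eq V E k \<longleftrightarrow> max_degree_le V E k \<and> (\<exists>v\<in>V. degree V E v = k)"

definition total_colouring ::
  "'a set \<Rightarrow> 'a set set \<Rightarrow> nat \<Rightarrow> ('a \<Rightarrow> nat) \<Rightarrow> ('a set \<Rightarrow> nat) \<Rightarrow> bool" where
  "total_colouring V E k cv ce \<longleftrightarrow>
     (\<forall>v\<in>V. cv v \<in> {1..k}) \<and> (\<forall>e\<in>E. ce e \<in> {1..k}) \<and>
     (\<forall>x\<in>V. \<forall>y\<in>V. x \<noteq> y \<and> {x, y} \<in> E \<longrightarrow> cv x \<noteq> cv y) \<and>
     (\<forall>e\<in>E. \<forall>e'\<in>E. e \<noteq> e' \<and> e \<inter> e' \<noteq> {} \<longrightarrow> ce e \<noteq> ce e') \<and>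
     (\<forall>e\<in>E. \<forall>v\<in>e. cv v \<noteq> ce e)"

definition total_colourable :: "'a set \<Rightarrow> 'a set set \<Rightarrow> nat \<Rightarrow> bool" where
  "total_colourable V E k \<longleftrightarrow> (\<exists>cv ce. total_colouring V E k cv ce)"

definition has_4fan :: "'a set \<Rightarrow> 'a set set \<Rightarrow> bool" where
  "has_4fan V E \<longleftrightarrow> (\<exists>c u1 u2 u3 u4 u5.
     {c, u1, u2, u3, u4, u5} \<subseteq> V \<and> distinct [c, u1, u2, u3, u4, u5] \<and>
     {c, u1} \<in> E \<and> {c, u2} \<in> E \<and> {c, u3} \<in> E \<and> {c, u4} \<in> E \<and> {c, u5} \<in> E \<and>
     {u1, u2} \<in> E \<and> {u2, u3} \<in> E \<and> {u3, u4} \<in> E \<and> {u4, u5} \<in> E)"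

text \<open>A combinatorial embedding (rotation system): at every vertex v, rot v is a cyclic
  permutation of the neighbours of v (the clockwise order of edges around v).\<close>

definition rotation_system :: "'a set \<Rightarrow> 'a set set \<Rightarrow> ('a \<Rightarrow> 'a \<Rightarrow> 'a) \<Rightarrow> bool" where
  "rotation_system V E rot \<longleftrightarrow> (\<forall>v\<in>V.
     (\<forall>x\<in>neighbours V E v. rot v x \<in> neighbours V E v) \<and>
     inj_on (rot v) (neighbours V E v) \<and>
     (\<forall>x\<in>neighbours V E v. \<forall>y\<in>neighbours V E v. \<exists>n. (rot v ^^ n) x = y))"

definition darts :: "'a set \<Rightarrow> 'a set set \<Rightarrow> ('a \<times> 'a) set" where
  "darts V E = {(x, y). x \<in> V \<and> y \<in> V \<and> x \<noteq> y \<and> {x, y} \<in> E}"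

definition face_step :: "('a \<Rightarrow> 'a \<Rightarrow> 'a) \<Rightarrow> 'a \<times> 'a \<Rightarrow> 'a \<times> 'a" where
  "face_step rot d = (snd d, rot (snd d) (fst d))"

definition face :: "('a \<Rightarrow> 'a \<Rightarrow> 'a) \<Rightarrow> 'a \<times> 'a \<Rightarrow> ('a \<times> 'a) set" where
  "face rot d = {(face_step rot ^^ n) d | n. True}"

text \<open>Faces are the orbits of face tracing on the darts; the length of a face is the number
  of darts in it.\<close>

definition faces :: "'a set \<Rightarrow> 'a set set \<Rightarrow> ('a \<Rightarrow> 'a \<Rightarrow> 'a) \<Rightarrow> ('a \<times> 'a) set set" where
  "faces V E rot = face rot ` darts V E"

definition edge_on_face :: "'a \<Rightarrow> 'a \<Rightarrow> ('a \<times> 'a) set \<Rightarrow> bool" where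
  "edge_on_face x y f \<longleftrightarrow> (x, y) \<in> f \<or> (y, x) \<in> f"

definition components :: "'a set \<Rightarrow> 'a set set \<Rightarrow> 'a set set" where
  "components V E = {{y \<in> V. (\<lambda>a b. {a, b} \<in> E)\<^sup>*\<^sup>* x y} | x. x \<in> V}"

definition isolated :: "'a set \<Rightarrow> 'a set set \<Rightarrow> 'a set" where
  "isolated V E = {v \<in> V. neighbours V E v = {}}"

text \<open>A rotation system is a plane embedding iff every component has Euler genus 0, i.e.
  V - E + F = 2 per component (isolated vertices counting as one face each).\<close>

definition plane_rotation :: "'a set \<Rightarrow> 'a set set \<Rightarrow> ('a \<Rightarrow> 'a \<Rightarrow> 'a) \<Rightarrow> bool" where
  "plane_rotation V E rot \<longleftrightarrow> rotation_system V E rot \<and>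
     int (card V) - int (card E) + int (card (faces V E rot)) + int (card (isolated V E))
       = 2 * int (card (components V E))"

definition planar :: "'a set \<Rightarrow> 'a set set \<Rightarrow> bool" where
  "planar V E \<longleftrightarrow> (\<exists>rot. plane_rotation V E rot)"

definition minimal_counterexample :: "'a set \<Rightarrow> 'a set set \<Rightarrow> bool" where
  "minimal_counterexample V E \<longleftrightarrow>
     simple_graph V E \<and> planar V E \<and> max_degree_eq V E 8 \<and> \<not> has_4fan V E \<and>
     \<not> total_colourable V E 9 \<and>
     (\<forall>(VH :: nat set) EH. simple_graph VH EH \<and> planar VH EH \<and> max_degree_le VH EH 8 \<and>
        \<not> has_4fan VH EH \<and> card VH + card EH < card V + card E \<longrightarrow> total_colourable VH EH 9)"

end

theory Submission
  imports Defs
begin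

definition orbit_of :: "('b \<Rightarrow> 'b) \<Rightarrow> 'b \<Rightarrow> 'b set" where
  "orbit_of s d = {(s^^n) d | n. True}"

locale fperm =
  fixes D :: "'b set" and s :: "'b \<Rightarrow> 'b"
  assumes fin: "finite D" and maps: "\<And>d. d \<in> D \<Longrightarrow> s d \<in> D" and inj: "inj_on s D"
begin

abbreviation orb :: "'b \<Rightarrow> 'b set" where "orb \<equiv> orbit_of s"

lemma orb_def: "orb d = {(s^^n) d | n. True}"
  by (simp add: orbit_of_def)

lemma pw_add: "(s^^(m+n)) d = (s^^m) ((s^^n) d)"
  by (simp add: funpow_add)

lemma pow_in: "d \<in> D \<Longrightarrow> (s^^n) d \<in> D"
  by (induction n) (auto intro: maps)

lemma pow_inj: "inj_on (s^^n) D"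
proof (induction n)
  case 0 then show ?case by simp
next
  case (Suc n)
  have "inj_on s ((s^^n) ` D)" by (rule inj_on_subset[OF inj]) (auto intro: pow_in)
  then have "inj_on (s \<circ> (s^^n)) D" by (rule comp_inj_on[OF Suc.IH])
  then show ?case by (simp add: comp_def)
qed

lemma per_ex: assumes "d \<in> D" shows "\<exists>n>0. (s^^n) d = d"
proof -
  have "\<not> inj_on (\<lambda>n. (s^^n) d) {..card D}"
  proof
    assume a: "inj_on (\<lambda>n. (s^^n) d) {..card D}"
    have "card ((\<lambda>n. (s^^n) d) ` {..card D}) = card {..card D}" using card_image[OF a] .
    moreover have "(\<lambda>n. (s^^n) d) ` {..card D} \<subseteq> D" using pow_in assms by auto
    then have "card ((\<lambda>n. (s^^n) d) ` {..card D}) \<le> card D" by (rule card_mono[OF fin])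
    ultimately show False by simp
  qed
  then obtain i j where ij: "i \<noteq> j" "(s^^i) d = (s^^j) d" unfolding inj_on_def by blast
  have key: "\<exists>n>0. (s^^n) d = d" if "i < j" "(s^^i) d = (s^^j) d" for i j
  proof -
    have "(s^^i) ((s^^(j-i)) d) = (s^^j) d"
      using that pw_add[of i "j-i" d] by simp
    then have "(s^^i) ((s^^(j-i)) d) = (s^^i) d" using that by simp
    then have "(s^^(j-i)) d = d" using pow_inj[of i] pow_in assms unfolding inj_on_def by blast
    then show ?thesis using that by (intro exI[of _ "j-i"]) auto
  qed
  show ?thesis
  proof (cases "i < j")
    case True then show ?thesis using ij key[of i j] by blast
  next
    case False then have "j < i" using ij(1) by simp
    then show ?thesis using ij key[of j i] by simp
  qed
qed

definition per :: "'b \<Rightarrow> nat" where "per d = (LEAST n. 0 < n \<and> (s^^n) d = d)"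

lemma per: assumes "d \<in> D" shows "0 < per d" "(s^^(per d)) d = d"
  using LeastI_ex[OF per_ex[OF assms]] unfolding per_def by auto

lemma per_min: "0 < k \<Longrightarrow> k < per d \<Longrightarrow> (s^^k) d \<noteq> d"
  unfolding per_def using not_less_Least by blast

lemma pow_mult_per: assumes "d \<in> D" shows "(s^^(per d * q)) d = d"
proof (induction q)
  case 0 then show ?case by simp
next
  case (Suc q)
  have "per d * Suc q = per d + per d * q" by simp
  then have "(s^^(per d * Suc q)) d = (s^^(per d)) ((s^^(per d * q)) d)"
    using pw_add[of "per d" "per d * q" d] by simp
  then show ?case using Suc per[OF assms] by simp
qed

lemma pow_mod: assumes "d \<in> D" shows "(s^^n) d = (s^^(n mod per d)) d"
proof -
  have "n = n mod per d + per d * (n div per d)" by simp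
  then have "(s^^n) d = (s^^(n mod per d)) ((s^^(per d * (n div per d))) d)"
    using pw_add[of "n mod per d" "per d * (n div per d)" d] by simp
  then show ?thesis using pow_mult_per[OF assms] by simp
qed

lemma pow_distinct: assumes "d \<in> D" "i < per d" "j < per d" "(s^^i) d = (s^^j) d" shows "i = j"
proof (rule ccontr)
  assume "i \<noteq> j"
  have key: False if "i < j" "j < per d" "(s^^i) d = (s^^j) d" for i j
  proof -
    have "(s^^i) ((s^^(j-i)) d) = (s^^j) d"
      using that pw_add[of i "j-i" d] by simp
    then have "(s^^i) ((s^^(j-i)) d) = (s^^i) d" using that by simp
    then have "(s^^(j-i)) d = d" using pow_inj[of i] pow_in assms(1) unfolding inj_on_def by blast
    then show False using per_min[of "j-i" d] that by auto
  qed
  show False using key[of i j] key[of j i] assms \<open>i \<noteq> j\<close> by (cases "i < j") auto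
qed

lemma orb_eq: assumes "d \<in> D" shows "orb d = (\<lambda>i. (s^^i) d) ` {..<per d}"
proof
  show "orb d \<subseteq> (\<lambda>i. (s^^i) d) ` {..<per d}"
  proof
    fix e assume "e \<in> orb d"
    then obtain n where "e = (s^^n) d" unfolding orb_def by auto
    then have "e = (s^^(n mod per d)) d" using pow_mod[OF assms] by simp
    moreover have "n mod per d < per d" using per[OF assms] by simp
    ultimately show "e \<in> (\<lambda>i. (s^^i) d) ` {..<per d}" by auto
  qed
qed (auto simp: orb_def)

lemma card_orb: assumes "d \<in> D" shows "card (orb d) = per d"
proof -
  have "inj_on (\<lambda>i. (s^^i) d) {..<per d}"
    unfolding inj_on_def using pow_distinct[OF assms] by auto
  then show ?thesis using orb_eq[OF assms] card_image by fastforce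
qed

lemma orb_sub: "d \<in> D \<Longrightarrow> orb d \<subseteq> D"
  unfolding orb_def using pow_in by auto

lemma self_in_orb: "d \<in> orb d"
  unfolding orb_def by (auto intro: exI[of _ 0])

lemma step_in_orb: "s d \<in> orb d"
  unfolding orb_def by (auto intro!: exI[of _ 1])

lemma pow_in_orb: "(s^^n) d \<in> orb d"
  unfolding orb_def by auto

lemma orb_pow: "orb ((s^^k) d) \<subseteq> orb d"
  unfolding orb_def by (auto simp: pw_add[symmetric] simp del: funpow.simps)

lemma orb_back: assumes "d \<in> D" shows "d \<in> orb ((s^^k) d)"
proof -
  define m where "m = per d - k mod per d"
  have "(s^^m) ((s^^k) d) = (s^^(m + k)) d" by (simp add: pw_add)
  also have "\<dots> = (s^^((m + k) mod per d)) d" using pow_mod[OF assms] by simp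
  also have "(m + k) mod per d = 0"
  proof -
    have "k mod per d < per d" using per[OF assms] by simp
    then have "m + k mod per d = per d" unfolding m_def by simp
    then have "(m + k) mod per d = (per d) mod per d" by (metis mod_add_right_eq)
    then show ?thesis by simp
  qed
  finally show ?thesis unfolding orb_def by (auto intro: exI[of _ m])
qed

lemma orb_same: assumes "d \<in> D" "e \<in> orb d" shows "orb e = orb d"
proof -
  obtain k where k: "e = (s^^k) d" using assms(2) unfolding orb_def by auto
  have "orb e \<subseteq> orb d" using orb_pow k by simp
  moreover have "orb d \<subseteq> orb e"
  proof -
    have "d \<in> orb e" using orb_back[OF assms(1)] k by simp
    then obtain m where "d = (s^^m) e" unfolding orb_def by auto
    then show ?thesis using orb_pow by simp
  qed
  ultimately show ?thesis by blast
qed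

lemma orb_disj: assumes "d \<in> D" "e \<in> D" "orb d \<inter> orb e \<noteq> {}" shows "orb d = orb e"
proof -
  obtain z where z: "z \<in> orb d" "z \<in> orb e" using assms(3) by auto
  show ?thesis using orb_same[OF assms(1) z(1)] orb_same[OF assms(2) z(2)] by simp
qed

lemma orb_closed: assumes "d \<in> D" "e \<in> orb d" shows "s e \<in> orb d"
  using orb_same[OF assms] step_in_orb by blast

end

lemma edge_in_V: "simple_graph V E \<Longrightarrow> {x,y} \<in> E \<Longrightarrow> x \<in> V \<and> y \<in> V \<and> x \<noteq> y"
  unfolding simple_graph_def by (metis doubleton_eq_iff insert_absorb2 insert_iff singleton_insert_inj_eq)

lemma sg_edge: "simple_graph V E \<Longrightarrow> e \<in> E \<Longrightarrow> \<exists>x y. e = {x,y} \<and> x \<noteq> y \<and> x \<in> V \<and> y \<in> V"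
  unfolding simple_graph_def by blast

lemma sg_fin: "simple_graph V E \<Longrightarrow> finite V"
  unfolding simple_graph_def by blast

lemma sg_finE: assumes "simple_graph V E" shows "finite E"
proof -
  have "E \<subseteq> Pow V" using sg_edge[OF assms] by fastforce
  then show ?thesis using finite_subset sg_fin[OF assms] by blast
qed

lemma nb_iff: "y \<in> neighbours V E x \<longleftrightarrow> y \<in> V \<and> y \<noteq> x \<and> {y,x} \<in> E"
  unfolding neighbours_def by blast

lemma nb_sym: "simple_graph V E \<Longrightarrow> y \<in> neighbours V E x \<Longrightarrow> x \<in> neighbours V E y"
  unfolding nb_iff using edge_in_V by (metis insert_commute)

lemma nb_edge: "simple_graph V E \<Longrightarrow> {x,y} \<in> E \<Longrightarrow> y \<in> neighbours V E x"
  unfolding nb_iff using edge_in_V by (metis insert_commute)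

lemma darts_iff: "(x,y) \<in> darts V E \<longleftrightarrow> x \<in> V \<and> y \<in> V \<and> x \<noteq> y \<and> {x,y} \<in> E"
  unfolding darts_def by simp

lemma darts_nb: "(x,y) \<in> darts V E \<longleftrightarrow> y \<in> V \<and> x \<in> neighbours V E y"
  unfolding darts_iff nb_iff by (auto simp: insert_commute)

lemma darts_fin: "simple_graph V E \<Longrightarrow> finite (darts V E)"
proof -
  assume "simple_graph V E"
  then have "finite (V \<times> V)" using sg_fin by blast
  moreover have "darts V E \<subseteq> V \<times> V" unfolding darts_def by auto
  ultimately show ?thesis using finite_subset by blast
qed

lemma rot_in: "rotation_system V E rot \<Longrightarrow> v \<in> V \<Longrightarrow> x \<in> neighbours V E v \<Longrightarrow> rot v x \<in> neighbours V E v"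
  unfolding rotation_system_def by blast

lemma rot_inj: "rotation_system V E rot \<Longrightarrow> v \<in> V \<Longrightarrow> x \<in> neighbours V E v \<Longrightarrow> y \<in> neighbours V E v
   \<Longrightarrow> rot v x = rot v y \<Longrightarrow> x = y"
  unfolding rotation_system_def inj_on_def by blast

lemma rot_cyc: "rotation_system V E rot \<Longrightarrow> v \<in> V \<Longrightarrow> x \<in> neighbours V E v \<Longrightarrow> y \<in> neighbours V E v
   \<Longrightarrow> \<exists>n. (rot v ^^ n) x = y"
  unfolding rotation_system_def by blast

lemma rot_fix: assumes "rotation_system V E rot" "v \<in> V" "x \<in> neighbours V E v" "rot v x = x"
  shows "neighbours V E v = {x}"
proof -
  have "(rot v ^^ n) x = x" for n by (induction n) (use assms in auto)
  then show ?thesis using rot_cyc[OF assms(1,2,3)] assms(3) by blast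
qed

lemma rot_two: assumes "rotation_system V E rot" "v \<in> V" "x \<in> neighbours V E v" "rot v x = y" "rot v y = x"
  shows "neighbours V E v \<subseteq> {x,y}"
proof -
  have "(rot v ^^ n) x \<in> {x,y}" for n by (induction n) (use assms in auto)
  then show ?thesis using rot_cyc[OF assms(1,2,3)] by blast
qed

lemma fs_maps: assumes "simple_graph V E" "rotation_system V E rot" "d \<in> darts V E"
  shows "face_step rot d \<in> darts V E"
proof -
  obtain x y where d: "d = (x,y)" by (cases d)
  have "y \<in> V" "x \<in> neighbours V E y" using assms(3) d by (simp_all add: darts_nb)
  then have "rot y x \<in> neighbours V E y" using rot_in[OF assms(2)] by blast
  then have "(y, rot y x) \<in> darts V E"
    using nb_sym[OF assms(1)] darts_nb \<open>y \<in> V\<close> by (metis nb_iff)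
  then show ?thesis by (simp add: face_step_def d)
qed

lemma fs_inj: assumes "rotation_system V E rot" shows "inj_on (face_step rot) (darts V E)"
proof (rule inj_onI)
  fix d e assume d: "d \<in> darts V E" and e: "e \<in> darts V E" and eq: "face_step rot d = face_step rot e"
  obtain x y where dd: "d = (x,y)" by (cases d)
  obtain x' y' where ee: "e = (x',y')" by (cases e)
  have "y = y'" "rot y x = rot y' x'" using eq dd ee by (auto simp: face_step_def)
  moreover have "y \<in> V" "x \<in> neighbours V E y" "x' \<in> neighbours V E y'" using d e dd ee by (simp_all add: darts_nb)
  ultimately have "x = x'" using rot_inj[OF assms] by metis
  then show "d = e" using dd ee \<open>y = y'\<close> by simp
qed

lemma fperm_fs: "simple_graph V E \<Longrightarrow> rotation_system V E rot \<Longrightarrow> fperm (darts V E) (face_step rot)"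
  by (unfold_locales) (auto intro: darts_fin fs_maps fs_inj)

lemma face_orb: "orbit_of (face_step rot) d = face rot d"
  unfolding orbit_of_def face_def by simp

lemma skip_perm:
  assumes maps: "\<forall>x\<in>N. r x \<in> N" and inj: "inj_on r N"
    and cyc: "\<forall>x\<in>N. \<forall>y\<in>N. \<exists>n. (r^^n) x = y" and c: "c \<in> N"
  defines "r' \<equiv> \<lambda>x. if r x = c then r c else r x"
  shows "\<forall>x\<in>N-{c}. r' x \<in> N-{c}" "inj_on r' (N-{c})"
    "\<forall>x\<in>N-{c}. \<forall>y\<in>N-{c}. \<exists>n. (r'^^n) x = y"
proof -
  have rc: "r c \<in> N - {c}" if "x \<in> N - {c}" "r x = c" for x
  proof -
    have "r c \<noteq> c" using that inj c unfolding inj_on_def by force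
    then show ?thesis using maps c by blast
  qed
  show "\<forall>x\<in>N-{c}. r' x \<in> N-{c}" unfolding r'_def using rc maps by auto
  show "inj_on r' (N-{c})"
  proof (rule inj_onI)
    fix x y assume x: "x \<in> N - {c}" and y: "y \<in> N - {c}" and e: "r' x = r' y"
    show "x = y"
    proof (cases "r x = c")
      case True
      show ?thesis
      proof (cases "r y = c")
        case True
        then show ?thesis using \<open>r x = c\<close> x y inj unfolding inj_on_def by blast
      next
        case False
        then have "r c = r y" using e True unfolding r'_def by simp
        then have "c = y" using inj c y unfolding inj_on_def by blast
        then show ?thesis using y by blast
      qed
    next
      case False
      show ?thesis
      proof (cases "r y = c")
        case True
        then have "r c = r x" using e False unfolding r'_def by simp
        then have "c = x" using inj c x unfolding inj_on_def by blast
        then show ?thesis using x by blast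
      next
        case False
        then have "r x = r y" using e \<open>r x \<noteq> c\<close> unfolding r'_def by simp
        then show ?thesis using x y inj unfolding inj_on_def by blast
      qed
    qed
  qed
  have main: "\<forall>x. x \<in> N-{c} \<longrightarrow> (r^^n) x = y \<longrightarrow> (\<exists>m. (r'^^m) x = y)" if y: "y \<in> N - {c}" for n y
  proof (induction n rule: less_induct)
    case (less n)
    show ?case
    proof (intro allI impI)
      fix x assume x: "x \<in> N - {c}" and e: "(r^^n) x = y"
      show "\<exists>m. (r'^^m) x = y"
      proof (cases n)
        case 0 then show ?thesis using e by (intro exI[of _ 0]) simp
      next
        case (Suc k)
        then have e2: "(r^^k) (r x) = y" using e by (simp add: funpow_Suc_right del: funpow.simps)
        show ?thesis
        proof (cases "r x = c")
          case True
          show ?thesis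
          proof (cases k)
            case 0 then show ?thesis using e2 True y by simp
          next
            case (Suc l)
            then have e3: "(r^^l) (r c) = y" using e2 True by (simp add: funpow_Suc_right del: funpow.simps)
            have "r c \<in> N - {c}" using rc[OF x True] .
            then obtain m where "(r'^^m) (r c) = y" using less.IH[of l] e3 \<open>n = Suc k\<close> Suc by auto
            moreover have "r' x = r c" using True unfolding r'_def by simp
            ultimately show ?thesis by (intro exI[of _ "Suc m"]) (simp add: funpow_Suc_right del: funpow.simps)
          qed
        next
          case False
          then have "r x \<in> N - {c}" using maps x by auto
          then obtain m where "(r'^^m) (r x) = y" using less.IH[of k] e2 \<open>n = Suc k\<close> by auto
          moreover have "r' x = r x" using False unfolding r'_def by simp
          ultimately show ?thesis by (intro exI[of _ "Suc m"]) (simp add: funpow_Suc_right del: funpow.simps)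
        qed
      qed
    qed
  qed
  show "\<forall>x\<in>N-{c}. \<forall>y\<in>N-{c}. \<exists>n. (r'^^n) x = y"
  proof (intro ballI)
    fix x y assume x: "x \<in> N - {c}" and y: "y \<in> N - {c}"
    obtain n where "(r^^n) x = y" using cyc x y by blast
    then show "\<exists>n. (r'^^n) x = y" using main[OF y, of n] x by blast
  qed
qed

definition delrot :: "('a \<Rightarrow> 'a \<Rightarrow> 'a) \<Rightarrow> 'a \<Rightarrow> 'a \<Rightarrow> 'a \<Rightarrow> 'a \<Rightarrow> 'a" where
  "delrot rot a b = (\<lambda>z x. if z = a \<and> rot a x = b then rot a b
      else if z = b \<and> rot b x = a then rot b a else rot z x)"

lemma nb_del: "neighbours V (E - {{a,b}}) z =
   neighbours V E z - (if z = a then {b} else {}) - (if z = b then {a} else {})"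
  unfolding neighbours_def by (auto simp: doubleton_eq_iff)

lemma sg_del: "simple_graph V E \<Longrightarrow> simple_graph V (E - X)"
  unfolding simple_graph_def by blast

lemma del_rotsys:
  assumes sg: "simple_graph V E" and rs: "rotation_system V E rot" and ab: "{a,b} \<in> E"
  shows "rotation_system V (E - {{a,b}}) (delrot rot a b)"
  unfolding rotation_system_def
proof (intro ballI)
  fix z assume z: "z \<in> V"
  have abV: "a \<in> V" "b \<in> V" "a \<noteq> b" using edge_in_V[OF sg ab] by auto
  let ?N = "neighbours V E z"
  have m: "\<forall>x\<in>?N. rot z x \<in> ?N" and i: "inj_on (rot z) ?N" and c: "\<forall>x\<in>?N. \<forall>y\<in>?N. \<exists>n. (rot z ^^ n) x = y"
    using rs z unfolding rotation_system_def by auto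
  show "(\<forall>x\<in>neighbours V (E - {{a, b}}) z. delrot rot a b z x \<in> neighbours V (E - {{a, b}}) z) \<and>
        inj_on (delrot rot a b z) (neighbours V (E - {{a, b}}) z) \<and>
        (\<forall>x\<in>neighbours V (E - {{a, b}}) z. \<forall>y\<in>neighbours V (E - {{a, b}}) z. \<exists>n. (delrot rot a b z ^^ n) x = y)"
  proof (cases "z = a")
    case True
    have bN: "b \<in> ?N" using True ab abV nb_edge[OF sg] by (metis insert_commute)
    have eq: "delrot rot a b z = (\<lambda>x. if rot z x = b then rot z b else rot z x)"
      using True abV unfolding delrot_def by auto
    have nb: "neighbours V (E - {{a, b}}) z = ?N - {b}" using nb_del[of V E a b z] True abV by simp
    show ?thesis unfolding eq nb using skip_perm[OF m i c bN] by blast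
  next
    case za: False
    show ?thesis
    proof (cases "z = b")
      case True
      have aN: "a \<in> ?N" using True ab nb_edge[OF sg, of b a] by (simp add: insert_commute)
      have eq: "delrot rot a b z = (\<lambda>x. if rot z x = a then rot z a else rot z x)"
        using True abV unfolding delrot_def by auto
      have nb: "neighbours V (E - {{a, b}}) z = ?N - {a}" using nb_del[of V E a b z] True abV by simp
      show ?thesis unfolding eq nb using skip_perm[OF m i c aN] by blast
    next
      case False
      have eq: "delrot rot a b z = rot z" using za False unfolding delrot_def by auto
      have nb: "neighbours V (E - {{a, b}}) z = ?N" using nb_del[of V E a b z] za False by simp
      show ?thesis unfolding eq nb using m i c by blast
    qed
  qed
qed

lemma fs_del:
  assumes sg: "simple_graph V E" and ab: "{a,b} \<in> E" and d: "d \<in> darts V (E - {{a,b}})"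
  shows "face_step (delrot rot a b) d =
    (if face_step rot d \<in> {(a,b),(b,a)} then face_step rot (prod.swap (face_step rot d)) else face_step rot d)"
proof -
  have abV: "a \<noteq> b" using edge_in_V[OF sg ab] by auto
  obtain x y where dd: "d = (x,y)" by (cases d)
  show ?thesis using abV unfolding dd face_step_def delrot_def by auto
qed

lemma rtr_sym: assumes "\<And>x y. R x y \<Longrightarrow> R y x" shows "R\<^sup>*\<^sup>* x y \<Longrightarrow> R\<^sup>*\<^sup>* y x"
proof (induction rule: rtranclp.induct)
  case (rtrancl_refl a) then show ?case by simp
next
  case (rtrancl_into_rtrancl a b c)
  then show ?case using assms by (meson converse_rtranclp_into_rtranclp)
qed

lemma edge_rel_sym: "{x,y} \<in> E \<Longrightarrow> {y,x} \<in> E" by (simp add: insert_commute)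

locale dele =
  fixes V :: "'a set" and E :: "'a set set" and rot :: "'a \<Rightarrow> 'a \<Rightarrow> 'a" and a b :: 'a
  assumes sg: "simple_graph V E" and rs: "rotation_system V E rot" and ab: "{a,b} \<in> E"
begin

lemma abV: "a \<in> V" "b \<in> V" "a \<noteq> b" using edge_in_V[OF sg ab] by auto

lemma sg': "simple_graph V (E - {{a,b}})" using sg_del[OF sg] .
lemma rs': "rotation_system V (E - {{a,b}}) (delrot rot a b)" using del_rotsys[OF sg rs ab] .

sublocale O: fperm "darts V E" "face_step rot" by (rule fperm_fs[OF sg rs])
sublocale O': fperm "darts V (E - {{a,b}})" "face_step (delrot rot a b)" by (rule fperm_fs[OF sg' rs'])

lemma D'_eq: "darts V (E - {{a,b}}) = darts V E - {(a,b),(b,a)}"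
  unfolding darts_def by (auto simp: doubleton_eq_iff)

lemma ab_D: "(a,b) \<in> darts V E" "(b,a) \<in> darts V E"
  using abV ab by (auto simp: darts_iff insert_commute)

lemma faces_eq: "faces V E rot = O.orb ` darts V E" "faces V (E - {{a,b}}) (delrot rot a b) = O'.orb ` darts V (E - {{a,b}})"
  unfolding faces_def face_orb by simp_all

lemma sig': "d \<in> darts V (E - {{a,b}}) \<Longrightarrow> face_step (delrot rot a b) d =
    (if face_step rot d \<in> {(a,b),(b,a)} then face_step rot (prod.swap (face_step rot d)) else face_step rot d)"
  by (rule fs_del[OF sg ab])

lemma unchanged: assumes d: "d \<in> darts V E" and n1: "(a,b) \<notin> O.orb d" and n2: "(b,a) \<notin> O.orb d"
  shows "O'.orb d = O.orb d"
proof -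
  have pw: "(face_step (delrot rot a b) ^^ n) d = (face_step rot ^^ n) d" for n
  proof (induction n)
    case 0 then show ?case by simp
  next
    case (Suc n)
    let ?e = "(face_step rot ^^ n) d"
    have ei: "?e \<in> O.orb d" by (rule O.pow_in_orb)
    have "?e \<noteq> (a,b)" using ei n1 by force
    moreover have "?e \<noteq> (b,a)" using ei n2 by force
    moreover have "?e \<in> darts V E" using O.pow_in[OF d] .
    ultimately have eD: "?e \<in> darts V (E - {{a,b}})" unfolding D'_eq by simp
    have "face_step rot ?e = (face_step rot ^^ Suc n) d" by simp
    moreover have "(face_step rot ^^ Suc n) d \<in> O.orb d" by (rule O.pow_in_orb)
    ultimately have "face_step rot ?e \<notin> {(a,b),(b,a)}" using n1 n2 by (metis empty_iff insert_iff)
    then have "face_step (delrot rot a b) ?e = face_step rot ?e" using sig'[OF eD] by simp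
    then show ?case using Suc.IH by simp
  qed
  show ?thesis unfolding O.orb_def O'.orb_def pw by (rule refl)
qed

lemma other_faces: "faces V E rot - {O.orb (a,b), O.orb (b,a)} \<subseteq> faces V (E - {{a,b}}) (delrot rot a b)"
proof
  fix F assume F: "F \<in> faces V E rot - {O.orb (a,b), O.orb (b,a)}"
  then obtain d where d: "d \<in> darts V E" "F = O.orb d" unfolding faces_eq by auto
  have n1: "(a,b) \<notin> O.orb d" using O.orb_same[OF d(1)] F d(2) by blast
  have n2: "(b,a) \<notin> O.orb d" using O.orb_same[OF d(1)] F d(2) by blast
  have "d \<in> darts V (E - {{a,b}})" using O.self_in_orb[of d] n1 n2 d(1) D'_eq by auto
  then show "F \<in> faces V (E - {{a,b}}) (delrot rot a b)"
    unfolding faces_eq using unchanged[OF d(1) n1 n2] d(2) by auto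
qed

lemma new_face: assumes d': "d' \<in> darts V (E - {{a,b}})" and F: "F \<in> faces V E rot - {O.orb (a,b), O.orb (b,a)}"
   and dO: "d' \<in> O.orb (a,b) \<union> O.orb (b,a)"
  shows "O'.orb d' \<noteq> F"
proof
  assume eq: "O'.orb d' = F"
  obtain d where d: "d \<in> darts V E" "F = O.orb d" using F unfolding faces_eq by auto
  have "d' \<in> O.orb d" using O'.self_in_orb[of d'] eq d(2) by simp
  then show False using dO O.orb_disj[OF d(1) ab_D(1)] O.orb_disj[OF d(1) ab_D(2)] F d(2) by blast
qed

lemma fin_faces: "finite (faces V E rot)" "finite (faces V (E - {{a,b}}) (delrot rot a b))"
  unfolding faces_eq using darts_fin[OF sg] darts_fin[OF sg'] by auto

lemma card_minus2: "card (faces V E rot) \<le> card (faces V E rot - {O.orb (a,b), O.orb (b,a)}) + 2"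
proof -
  let ?F = "faces V E rot" and ?X = "{O.orb (a,b), O.orb (b,a)}"
  have "?F \<subseteq> (?F - ?X) \<union> ?X" by blast
  then have "card ?F \<le> card ((?F - ?X) \<union> ?X)" using fin_faces by (intro card_mono) auto
  also have "\<dots> \<le> card (?F - ?X) + card ?X" by (rule card_Un_le)
  also have "card ?X \<le> 2" by (simp add: card_insert_le_m1)
  finally show ?thesis by simp
qed

lemma diff_face: assumes ne: "O.orb (a,b) \<noteq> O.orb (b,a)"
  shows "card (faces V E rot) \<le> card (faces V (E - {{a,b}}) (delrot rot a b)) + 1"
proof -
  let ?X = "faces V E rot - {O.orb (a,b), O.orb (b,a)}"
  define d1 where "d1 = face_step rot (a,b)"
  have d1D: "d1 \<in> darts V E" unfolding d1_def using O.maps[OF ab_D(1)] .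
  have "d1 \<noteq> (a,b)" unfolding d1_def face_step_def using abV by simp
  moreover have "d1 \<noteq> (b,a)"
  proof
    assume "d1 = (b,a)"
    then have "(b,a) \<in> O.orb (a,b)" using O.step_in_orb unfolding d1_def by metis
    then show False using O.orb_same[OF ab_D(1)] ne by metis
  qed
  ultimately have d1D': "d1 \<in> darts V (E - {{a,b}})" using d1D D'_eq by auto
  have d1O: "d1 \<in> O.orb (a,b)" unfolding d1_def by (rule O.step_in_orb)
  have "insert (O'.orb d1) ?X \<subseteq> faces V (E - {{a,b}}) (delrot rot a b)"
    using other_faces d1D' unfolding faces_eq by auto
  then have "card (insert (O'.orb d1) ?X) \<le> card (faces V (E - {{a,b}}) (delrot rot a b))"
    using fin_faces by (intro card_mono) auto
  moreover have "O'.orb d1 \<notin> ?X" using new_face[OF d1D' _ ] d1O by blast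
  then have "card (insert (O'.orb d1) ?X) = card ?X + 1" using fin_faces by simp
  ultimately show ?thesis using card_minus2 by simp
qed

lemma iso_sub: "isolated V E \<subseteq> isolated V (E - {{a,b}})"
  unfolding isolated_def neighbours_def by auto

lemma fin_iso: "finite (isolated V (E - {{a,b}}))"
  unfolding isolated_def using sg_fin[OF sg] by simp

end

context dele begin

lemma same_face: assumes same: "O.orb (a,b) = O.orb (b,a)"
  shows "card (faces V E rot) + card (isolated V E) + 1
     \<le> card (faces V (E - {{a,b}}) (delrot rot a b)) + card (isolated V (E - {{a,b}}))"
proof -
  let ?s = "face_step rot" and ?s' = "face_step (delrot rot a b)"
  let ?F = "faces V E rot" and ?F' = "faces V (E - {{a,b}}) (delrot rot a b)"
  let ?X = "?F - {O.orb (a,b)}"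
  let ?I = "isolated V E" and ?I' = "isolated V (E - {{a,b}})"
  define p where "p = O.per (a,b)"
  have p: "0 < p" "(?s^^p) (a,b) = (a,b)" using O.per[OF ab_D(1)] unfolding p_def by auto
  have "(b,a) \<in> O.orb (a,b)" using same O.self_in_orb by simp
  then obtain j where j: "j < p" "(?s^^j) (a,b) = (b,a)" using O.orb_eq[OF ab_D(1)] unfolding p_def by auto
  have j0: "0 < j"
  proof (rule ccontr)
    assume "\<not> 0 < j" then have "j = 0" by simp
    then show False using j(2) abV by simp
  qed
  define P1 where "P1 = (\<lambda>i. (?s^^i) (a,b)) ` {0<..<j}"
  define P2 where "P2 = (\<lambda>i. (?s^^i) (a,b)) ` {j<..<p}"
  have dist: "\<And>i k. i < p \<Longrightarrow> k < p \<Longrightarrow> (?s^^i) (a,b) = (?s^^k) (a,b) \<Longrightarrow> i = k"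
    using O.pow_distinct[OF ab_D(1)] unfolding p_def by blast
  have inD': "(?s^^i) (a,b) \<in> darts V (E - {{a,b}})" if "0 < i" "i < p" "i \<noteq> j" for i
  proof -
    have "(?s^^i) (a,b) \<noteq> (?s^^0) (a,b)" using dist[of i 0] that p by auto
    then have "(?s^^i) (a,b) \<noteq> (a,b)" by simp
    moreover have "(?s^^i) (a,b) \<noteq> (b,a)" using dist[of i j] that j by auto
    ultimately show ?thesis unfolding D'_eq using O.pow_in[OF ab_D(1)] by simp
  qed
  have cl1: "?s' d \<in> P1" if dP: "d \<in> P1" for d
  proof -
    obtain i where i: "0 < i" "i < j" "d = (?s^^i) (a,b)" using dP unfolding P1_def by auto
    have dD: "d \<in> darts V (E - {{a,b}})" using inD'[of i] i j by auto
    have sd: "?s d = (?s^^Suc i) (a,b)" using i by simp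
    show ?thesis
    proof (cases "Suc i = j")
      case True
      then have "?s d = (b,a)" using sd j by simp
      then have "?s' d = ?s (a,b)" using sig'[OF dD] by simp
      also have "\<dots> = (?s^^1) (a,b)" by simp
      finally show ?thesis unfolding P1_def using True i by (intro image_eqI[of _ _ 1]) auto
    next
      case False
      have "(?s^^Suc i) (a,b) \<noteq> (?s^^0) (a,b)" using dist[of "Suc i" 0] i j p by auto
      then have "?s d \<noteq> (a,b)" using sd by simp
      moreover have "?s d \<noteq> (b,a)" using sd dist[of "Suc i" j] i j False by auto
      ultimately have "?s' d = ?s d" using sig'[OF dD] by simp
      then show ?thesis unfolding P1_def using sd False i by (intro image_eqI[of _ _ "Suc i"]) auto
    qed
  qed
  have cl2: "?s' d \<in> P2" if dP: "d \<in> P2" for d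
  proof -
    obtain i where i: "j < i" "i < p" "d = (?s^^i) (a,b)" using dP unfolding P2_def by auto
    have dD: "d \<in> darts V (E - {{a,b}})" using inD'[of i] i j0 by auto
    have sd: "?s d = (?s^^Suc i) (a,b)" using i by simp
    show ?thesis
    proof (cases "Suc i = p")
      case True
      then have "?s d = (a,b)" using sd p by simp
      then have "?s' d = ?s (b,a)" using sig'[OF dD] by simp
      also have "\<dots> = (?s^^Suc j) (a,b)" using j by simp
      finally show ?thesis unfolding P2_def using True i by (intro image_eqI[of _ _ "Suc j"]) auto
    next
      case False
      have "(?s^^Suc i) (a,b) \<noteq> (?s^^0) (a,b)" using dist[of "Suc i" 0] i p False by auto
      then have "?s d \<noteq> (a,b)" using sd by simp
      moreover have "?s d \<noteq> (b,a)" using sd dist[of "Suc i" j] i j False by auto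
      ultimately have "?s' d = ?s d" using sig'[OF dD] by simp
      then show ?thesis unfolding P2_def using sd False i by (intro image_eqI[of _ _ "Suc i"]) auto
    qed
  qed
  have orb1: "O'.orb d \<subseteq> P1" if "d \<in> P1" for d
  proof -
    have "(?s'^^n) d \<in> P1" for n by (induction n) (use that cl1 in auto)
    then show ?thesis unfolding O'.orb_def by auto
  qed
  have orb2: "O'.orb d \<subseteq> P2" if "d \<in> P2" for d
  proof -
    have "(?s'^^n) d \<in> P2" for n by (induction n) (use that cl2 in auto)
    then show ?thesis unfolding O'.orb_def by auto
  qed
  have XF': "?X \<subseteq> ?F'" using other_faces same by simp
  have cardX: "card ?F \<le> card ?X + 1"
  proof -
    have "O.orb (a,b) \<in> ?F" unfolding faces_eq using ab_D(1) by simp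
    then show ?thesis using fin_faces(1) by (simp add: card_Diff_singleton)
  qed
  have newf: "O'.orb ((?s^^i) (a,b)) \<in> ?F' - ?X" if "0 < i" "i < p" "i \<noteq> j" for i
  proof -
    have dD: "(?s^^i) (a,b) \<in> darts V (E - {{a,b}})" using inD' that by blast
    have "O'.orb ((?s^^i) (a,b)) \<notin> ?X"
      using new_face[OF dD] O.pow_in_orb[of i "(a,b)"] same by auto
    moreover have "O'.orb ((?s^^i) (a,b)) \<in> ?F'" unfolding faces_eq using dD by simp
    ultimately show ?thesis by blast
  qed
  have fI': "finite ?I'" by (rule fin_iso)
  have isub: "?I \<subseteq> ?I'" by (rule iso_sub)
  have fI: "finite ?I" using finite_subset[OF isub fI'] .
  have aN: "a \<in> neighbours V E b" using nb_edge[OF sg, of b a] ab by (simp add: insert_commute)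
  have bN: "b \<in> neighbours V E a" using nb_edge[OF sg, of a b] ab by simp
  have anI: "a \<notin> ?I" using bN unfolding isolated_def by auto
  have bnI: "b \<notin> ?I" using aN unfolding isolated_def by auto
  have bI: "b \<in> ?I'" if "j = 1"
  proof -
    have "?s (a,b) = (b,a)" using j that by simp
    then have "rot b a = a" by (simp add: face_step_def)
    then have "neighbours V E b = {a}" using rot_fix[OF rs abV(2) aN] by simp
    then have "neighbours V (E - {{a,b}}) b = {}" using nb_del[of V E a b b] abV by auto
    then show ?thesis unfolding isolated_def using abV by simp
  qed
  have aI: "a \<in> ?I'" if "Suc j = p"
  proof -
    have "(?s^^Suc j) (a,b) = ?s (b,a)" using j by simp
    then have "?s (b,a) = (a,b)" using that p by simp
    then have "rot a b = b" by (simp add: face_step_def)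
    then have "neighbours V E a = {b}" using rot_fix[OF rs abV(1) bN] by simp
    then have "neighbours V (E - {{a,b}}) a = {}" using nb_del[of V E a b a] abV by auto
    then show ?thesis unfolding isolated_def using abV by simp
  qed
  have fX: "finite ?X" using fin_faces by simp
  have fF': "finite ?F'" using fin_faces by simp
  have d1P1: "(?s^^1) (a,b) \<in> P1" if "1 < j" unfolding P1_def using that by (intro image_eqI[of _ _ 1]) auto
  have d2P2: "(?s^^Suc j) (a,b) \<in> P2" if "Suc j < p" unfolding P2_def using that by (intro image_eqI[of _ _ "Suc j"]) auto
  have d2nP1: "(?s^^Suc j) (a,b) \<notin> P1" if sj: "Suc j < p"
  proof
    assume "(?s^^Suc j) (a,b) \<in> P1"
    then obtain i where "0 < i" "i < j" "(?s^^Suc j) (a,b) = (?s^^i) (a,b)" unfolding P1_def by auto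
    then show False using dist[of "Suc j" i] sj j by auto
  qed
  show ?thesis
  proof (cases "j = 1")
    case True
    note bI' = bI[OF True]
    show ?thesis
    proof (cases "Suc j = p")
      case True
      note aI' = aI[OF True]
      have "insert a (insert b ?I) \<subseteq> ?I'" using aI' bI' isub by blast
      then have "card (insert a (insert b ?I)) \<le> card ?I'" using fI' by (rule card_mono[rotated])
      moreover have "card (insert a (insert b ?I)) = card ?I + 2"
        using anI bnI abV fI by simp
      moreover have "card ?X \<le> card ?F'" using XF' fF' by (rule card_mono[rotated])
      ultimately show ?thesis using cardX by simp
    next
      case False
      then have sjp: "Suc j < p" using j by simp
      have "insert (O'.orb ((?s^^Suc j) (a,b))) ?X \<subseteq> ?F'" using XF' newf[of "Suc j"] sjp by auto
      then have "card (insert (O'.orb ((?s^^Suc j) (a,b))) ?X) \<le> card ?F'" using fF' by (rule card_mono[rotated])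
      moreover have "card (insert (O'.orb ((?s^^Suc j) (a,b))) ?X) = card ?X + 1"
        using newf[of "Suc j"] sjp fX by simp
      moreover have "insert b ?I \<subseteq> ?I'" using bI' isub by blast
      then have "card (insert b ?I) \<le> card ?I'" using fI' by (rule card_mono[rotated])
      moreover have "card (insert b ?I) = card ?I + 1" using bnI fI by simp
      ultimately show ?thesis using cardX by simp
    qed
  next
    case False
    then have j1: "1 < j" using j0 by simp
    let ?F1 = "O'.orb ((?s^^1) (a,b))"
    have F1: "?F1 \<in> ?F' - ?X" using newf[of 1] j1 j by auto
    show ?thesis
    proof (cases "Suc j = p")
      case True
      note aI' = aI[OF True]
      have "insert ?F1 ?X \<subseteq> ?F'" using XF' F1 by auto
      then have "card (insert ?F1 ?X) \<le> card ?F'" using fF' by (rule card_mono[rotated])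
      moreover have "card (insert ?F1 ?X) = card ?X + 1" using F1 fX by simp
      moreover have "insert a ?I \<subseteq> ?I'" using aI' isub by blast
      then have "card (insert a ?I) \<le> card ?I'" using fI' by (rule card_mono[rotated])
      moreover have "card (insert a ?I) = card ?I + 1" using anI fI by simp
      ultimately show ?thesis using cardX by simp
    next
      case False
      then have sjp: "Suc j < p" using j by simp
      let ?F2 = "O'.orb ((?s^^Suc j) (a,b))"
      have F2: "?F2 \<in> ?F' - ?X" using newf[of "Suc j"] sjp by auto
      have "?F1 \<noteq> ?F2"
      proof
        assume "?F1 = ?F2"
        then have "(?s^^Suc j) (a,b) \<in> ?F1" using O'.self_in_orb by simp
        then show False using orb1[OF d1P1[OF j1]] d2nP1[OF sjp] by blast
      qed
      have "insert ?F1 (insert ?F2 ?X) \<subseteq> ?F'" using XF' F1 F2 by auto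
      then have "card (insert ?F1 (insert ?F2 ?X)) \<le> card ?F'" using fF' by (rule card_mono[rotated])
      moreover have "card (insert ?F1 (insert ?F2 ?X)) = card ?X + 2"
        using F1 F2 fX \<open>?F1 \<noteq> ?F2\<close> by simp
      moreover have "card ?I \<le> card ?I'" using isub fI' by (rule card_mono[rotated])
      ultimately show ?thesis using cardX by simp
    qed
  qed
qed

end

context dele begin

lemma crossing: assumes nc: "\<not> (\<lambda>x y. {x,y} \<in> E - {{a,b}})\<^sup>*\<^sup>* b a"
  shows "O.orb (a,b) = O.orb (b,a)"
proof -
  let ?R = "\<lambda>x y. {x,y} \<in> E - {{a,b}}"
  let ?A = "{y. ?R\<^sup>*\<^sup>* b y}"
  let ?s = "face_step rot"
  have aA: "a \<notin> ?A" using nc by simp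
  have inv: "(\<exists>i. 1 \<le> i \<and> i \<le> n \<and> (?s^^i) (a,b) = (b,a)) \<or>
      (fst ((?s^^n) (a,b)) \<in> ?A \<and> snd ((?s^^n) (a,b)) \<in> ?A)" if "1 \<le> n" for n
    using that
  proof (induction n)
    case 0 then show ?case by simp
  next
    case (Suc n)
    show ?case
    proof (cases "n = 0")
      case True
      let ?z = "rot b a"
      have aN: "a \<in> neighbours V E b" using nb_edge[OF sg, of b a] ab by (simp add: insert_commute)
      have zN: "?z \<in> neighbours V E b" using rot_in[OF rs abV(2) aN] .
      have s1: "(?s^^Suc n) (a,b) = (b, ?z)" using True by (simp add: face_step_def)
      show ?thesis
      proof (cases "?z = a")
        case True
        then show ?thesis using s1 by (intro disjI1 exI[of _ "Suc n"]) simp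
      next
        case False
        have "?z \<noteq> b" using zN unfolding nb_iff by simp
        then have "{b, ?z} \<noteq> {a,b}" using False by (auto simp: doubleton_eq_iff)
        moreover have "{b, ?z} \<in> E" using zN unfolding nb_iff by (simp add: insert_commute)
        ultimately have "?R b ?z" by simp
        then have "?R\<^sup>*\<^sup>* b ?z" by (rule r_into_rtranclp)
        then have "?z \<in> ?A" by simp
        moreover have "b \<in> ?A" by simp
        ultimately show ?thesis using s1 by simp
      qed
    next
      case False
      then have IH: "(\<exists>i. 1 \<le> i \<and> i \<le> n \<and> (?s^^i) (a,b) = (b,a)) \<or>
        (fst ((?s^^n) (a,b)) \<in> ?A \<and> snd ((?s^^n) (a,b)) \<in> ?A)" using Suc.IH by simp
      show ?thesis
      proof (cases "\<exists>i. 1 \<le> i \<and> i \<le> n \<and> (?s^^i) (a,b) = (b,a)")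
        case True
        then show ?thesis by (meson le_SucI)
      next
        case False
        obtain x y where xy: "(?s^^n) (a,b) = (x,y)" by (cases "(?s^^n) (a,b)")
        have xyA: "x \<in> ?A" "y \<in> ?A" using IH False xy by auto
        have "(x,y) \<in> darts V E" using O.pow_in[OF ab_D(1), of n] xy by simp
        then have yV: "y \<in> V" and xN: "x \<in> neighbours V E y" by (simp_all add: darts_nb)
        let ?z = "rot y x"
        have zN: "?z \<in> neighbours V E y" using rot_in[OF rs yV xN] .
        have s1: "(?s^^Suc n) (a,b) = (y, ?z)" using xy by (simp add: face_step_def)
        show ?thesis
        proof (cases "{y, ?z} = {a,b}")
          case True
          have "y \<noteq> a" using xyA aA by auto
          then have "y = b" "?z = a" using True by (auto simp: doubleton_eq_iff)
          then show ?thesis using s1 by (intro disjI1 exI[of _ "Suc n"]) simp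
        next
          case False
          moreover have "{y, ?z} \<in> E" using zN unfolding nb_iff by (simp add: insert_commute)
          ultimately have "?R y ?z" by simp
          then have "?z \<in> ?A" using xyA(2) by (simp add: rtranclp.rtrancl_into_rtrancl)
          then show ?thesis using s1 xyA by simp
        qed
      qed
    qed
  qed
  define p where "p = O.per (a,b)"
  have p: "0 < p" "(?s^^p) (a,b) = (a,b)" using O.per[OF ab_D(1)] unfolding p_def by auto
  have "\<exists>i. 1 \<le> i \<and> i \<le> p \<and> (?s^^i) (a,b) = (b,a)" using inv[of p] p aA by auto
  then have "(b,a) \<in> O.orb (a,b)" unfolding O.orb_def by (metis (mono_tags, lifting) mem_Collect_eq)
  then show ?thesis using O.orb_same[OF ab_D(1)] by metis
qed

lemma comp_conn: assumes conn: "(\<lambda>x y. {x,y} \<in> E - {{a,b}})\<^sup>*\<^sup>* a b"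
  shows "components V (E - {{a,b}}) = components V E"
proof -
  let ?R = "\<lambda>x y. {x,y} \<in> E - {{a,b}}" and ?Q = "\<lambda>x y. {x,y} \<in> E"
  have ba: "?R\<^sup>*\<^sup>* b a" using rtr_sym[of ?R, OF _ conn] by (auto simp: insert_commute)
  have eq: "?Q\<^sup>*\<^sup>* x y \<longleftrightarrow> ?R\<^sup>*\<^sup>* x y" for x y
  proof
    assume "?Q\<^sup>*\<^sup>* x y" then show "?R\<^sup>*\<^sup>* x y"
    proof (induction rule: rtranclp_induct)
      case base then show ?case by simp
    next
      case (step y z)
      show ?case
      proof (cases "{y,z} = {a,b}")
        case True
        then have "(y = a \<and> z = b) \<or> (y = b \<and> z = a)" by (auto simp: doubleton_eq_iff)
        then have "?R\<^sup>*\<^sup>* y z" using conn ba by auto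
        then show ?thesis using step.IH by (rule rtranclp_trans[rotated])
      next
        case False
        then have "?R y z" using step.hyps(2) by simp
        then show ?thesis using step.IH by (rule rtranclp.rtrancl_into_rtrancl[rotated])
      qed
    qed
  next
    assume "?R\<^sup>*\<^sup>* x y" then show "?Q\<^sup>*\<^sup>* x y"
      by (induction rule: rtranclp_induct) (auto intro: rtranclp.rtrancl_into_rtrancl)
  qed
  show ?thesis unfolding components_def eq ..
qed

lemma comp_le: "card (components V (E - {{a,b}})) \<le> card (components V E) + 1"
proof -
  let ?R = "\<lambda>x y. {x,y} \<in> E - {{a,b}}" and ?Q = "\<lambda>x y. {x,y} \<in> E"
  define cl where "cl x = {y \<in> V. ?Q\<^sup>*\<^sup>* x y}" for x
  define cl' where "cl' x = {y \<in> V. ?R\<^sup>*\<^sup>* x y}" for x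
  have C: "components V E = cl ` V" unfolding components_def cl_def by auto
  have C': "components V (E - {{a,b}}) = cl' ` V" unfolding components_def cl'_def by auto
  have symR: "?R\<^sup>*\<^sup>* x y \<Longrightarrow> ?R\<^sup>*\<^sup>* y x" for x y using rtr_sym[of ?R] by (auto simp: insert_commute)
  have symQ: "?Q\<^sup>*\<^sup>* x y \<Longrightarrow> ?Q\<^sup>*\<^sup>* y x" for x y using rtr_sym[of ?Q] by (auto simp: insert_commute)
  have clR: "cl' x = cl' c" if "?R\<^sup>*\<^sup>* c x" for c x
    unfolding cl'_def using that symR by (meson rtranclp_trans)
  have sub: "cl' ` V \<subseteq> (cl ` V - {cl a}) \<union> {cl' a, cl' b}"
  proof
    fix S assume "S \<in> cl' ` V"
    then obtain x where x: "x \<in> V" "S = cl' x" by auto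
    show "S \<in> (cl ` V - {cl a}) \<union> {cl' a, cl' b}"
    proof (cases "?Q\<^sup>*\<^sup>* a x")
      case True
      have "?R\<^sup>*\<^sup>* a x \<or> ?R\<^sup>*\<^sup>* b x" using True
      proof (induction rule: rtranclp_induct)
        case base then show ?case by simp
      next
        case (step y z)
        show ?case
        proof (cases "{y,z} = {a,b}")
          case True
          then have "z = a \<or> z = b" by (auto simp: doubleton_eq_iff)
          then show ?thesis by auto
        next
          case False
          then have "?R y z" using step.hyps(2) by simp
          then show ?thesis using step.IH by (meson rtranclp.rtrancl_into_rtrancl)
        qed
      qed
      then show ?thesis using clR x(2) by auto
    next
      case False
      have eq: "?Q\<^sup>*\<^sup>* x y \<longleftrightarrow> ?R\<^sup>*\<^sup>* x y" for y
      proof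
        assume "?Q\<^sup>*\<^sup>* x y" then show "?R\<^sup>*\<^sup>* x y"
        proof (induction rule: rtranclp_induct)
          case base then show ?case by simp
        next
          case (step y z)
          show ?case
          proof (cases "{y,z} = {a,b}")
            case True
            then have "y = a \<or> y = b" by (auto simp: doubleton_eq_iff)
            moreover have "?Q b a" using ab by (simp add: insert_commute)
            ultimately have "?Q\<^sup>*\<^sup>* x a" using step.hyps(1) by (auto intro: rtranclp.rtrancl_into_rtrancl)
            then have "?Q\<^sup>*\<^sup>* a x" using symQ by blast
            then show ?thesis using False by simp
          next
            case False
            then have "?R y z" using step.hyps(2) by simp
            then show ?thesis using step.IH by (meson rtranclp.rtrancl_into_rtrancl)
          qed
        qed
      next
        assume "?R\<^sup>*\<^sup>* x y" then show "?Q\<^sup>*\<^sup>* x y"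
          by (induction rule: rtranclp_induct) (auto intro: rtranclp.rtrancl_into_rtrancl)
      qed
      then have "cl' x = cl x" unfolding cl_def cl'_def by simp
      moreover have "cl x \<noteq> cl a"
      proof
        assume "cl x = cl a"
        moreover have "a \<in> cl a" unfolding cl_def using abV by simp
        ultimately have "a \<in> cl x" by simp
        then have "?Q\<^sup>*\<^sup>* x a" unfolding cl_def by simp
        then show False using symQ False by blast
      qed
      ultimately show ?thesis using x by auto
    qed
  qed
  have fV: "finite V" using sg_fin[OF sg] .
  have "card (cl' ` V) \<le> card ((cl ` V - {cl a}) \<union> {cl' a, cl' b})"
    using sub fV by (intro card_mono) auto
  also have "\<dots> \<le> card (cl ` V - {cl a}) + card {cl' a, cl' b}" by (rule card_Un_le)
  also have "card {cl' a, cl' b} \<le> 2" by (simp add: card_insert_le_m1)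
  also have "card (cl ` V - {cl a}) = card (cl ` V) - 1" using abV fV by (simp add: card_Diff_singleton)
  finally have "card (cl' ` V) \<le> card (cl ` V) - 1 + 2" by simp
  moreover have "card (cl ` V) \<ge> 1" using abV fV by (metis One_nat_def Suc_leI card_gt_0_iff empty_iff finite_imageI imageI)
  ultimately show ?thesis unfolding C C' by simp
qed

end

definition chi :: "'a set \<Rightarrow> 'a set set \<Rightarrow> ('a \<Rightarrow> 'a \<Rightarrow> 'a) \<Rightarrow> int" where
  "chi V E rot = int (card V) - int (card E) + int (card (faces V E rot)) + int (card (isolated V E))"

lemma (in dele) chi_step:
  "(chi V E rot \<le> chi V (E - {{a,b}}) (delrot rot a b) \<and>
      card (components V (E - {{a,b}})) = card (components V E)) \<or>
   (chi V E rot + 2 \<le> chi V (E - {{a,b}}) (delrot rot a b))"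
proof -
  have cE: "card (E - {{a,b}}) = card E - 1" using ab sg_finE[OF sg] by simp
  have cE1: "card E \<ge> 1" using ab sg_finE[OF sg] by (metis One_nat_def Suc_leI card_gt_0_iff empty_iff)
  have iso: "card (isolated V E) \<le> card (isolated V (E - {{a,b}}))"
    using iso_sub fin_iso by (rule card_mono[rotated])
  show ?thesis
  proof (cases "O.orb (a,b) = O.orb (b,a)")
    case True
    then show ?thesis using same_face cE cE1 unfolding chi_def by fastforce
  next
    case False
    then have conn: "(\<lambda>x y. {x,y} \<in> E - {{a,b}})\<^sup>*\<^sup>* b a" using crossing by blast
    have conn': "(\<lambda>x y. {x,y} \<in> E - {{a,b}})\<^sup>*\<^sup>* a b"
      using rtr_sym[of "\<lambda>x y. {x,y} \<in> E - {{a,b}}", OF _ conn] by (auto simp: insert_commute)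
    have "chi V E rot \<le> chi V (E - {{a,b}}) (delrot rot a b)"
      using diff_face[OF False] iso cE cE1 unfolding chi_def by linarith
    then show ?thesis using comp_conn[OF conn'] by simp
  qed
qed

lemma euler_le:
  assumes "simple_graph V E" "rotation_system V E rot"
  shows "chi V E rot \<le> 2 * int (card (components V E))"
  using assms
proof (induction "card E" arbitrary: E rot)
  case 0
  have fE: "finite E" using sg_finE[OF 0(2)] .
  then have E: "E = {}" using 0(1) by simp
  have dE: "darts V E = {}" unfolding darts_def E by simp
  have fc: "faces V E rot = {}" unfolding faces_def dE by simp
  have iso: "isolated V E = V" unfolding isolated_def neighbours_def E by simp
  have rel: "(\<lambda>x y. {x,y} \<in> E)\<^sup>*\<^sup>* x y \<longleftrightarrow> x = y" for x y
  proof
    assume "(\<lambda>x y. {x,y} \<in> E)\<^sup>*\<^sup>* x y" then show "x = y"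
      by (induction rule: rtranclp_induct) (auto simp: E)
  qed simp
  have comp: "components V E = (\<lambda>x. {x}) ` V" unfolding components_def rel by auto
  have cc: "card (components V E) = card V" unfolding comp by (rule card_image) (simp add: inj_on_def)
  show ?case unfolding chi_def fc iso using cc E by simp
next
  case (Suc n)
  then have "E \<noteq> {}" by auto
  then obtain e where e: "e \<in> E" by blast
  then obtain a b where ab: "e = {a,b}" using sg_edge[OF Suc(3)] by blast
  interpret dele V E rot a b using Suc(3,4) e ab by unfold_locales auto
  have cE: "n = card (E - {{a,b}})" using Suc(2) e ab sg_finE[OF Suc(3)] by simp
  have IH: "chi V (E - {{a,b}}) (delrot rot a b) \<le> 2 * int (card (components V (E - {{a,b}})))"
    using Suc(1)[OF cE sg' rs'] .
  show ?case using chi_step IH comp_le by linarith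
qed

lemma plane_del:
  assumes sg: "simple_graph V E" and pr: "plane_rotation V E rot" and ab: "{a,b} \<in> E"
  shows "plane_rotation V (E - {{a,b}}) (delrot rot a b)"
proof -
  have rs: "rotation_system V E rot" using pr unfolding plane_rotation_def by simp
  interpret dele V E rot a b using sg rs ab by unfold_locales
  have eq: "chi V E rot = 2 * int (card (components V E))" using pr unfolding plane_rotation_def chi_def by simp
  have le: "chi V (E - {{a,b}}) (delrot rot a b) \<le> 2 * int (card (components V (E - {{a,b}})))"
    using euler_le[OF sg' rs'] .
  have "chi V (E - {{a,b}}) (delrot rot a b) = 2 * int (card (components V (E - {{a,b}})))"
    using chi_step eq le comp_le by linarith
  then show ?thesis unfolding plane_rotation_def chi_def using rs' by simp
qed

locale gmap =
  fixes V :: "'a set" and E :: "'a set set" and f :: "'a \<Rightarrow> 'b"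
  assumes sg: "simple_graph V E" and inj: "inj_on f V"
begin

abbreviation "V2 \<equiv> f ` V"
abbreviation "E2 \<equiv> (\<lambda>e. f ` e) ` E"
abbreviation "g \<equiv> inv_into V f"

lemma EV: "e \<in> E \<Longrightarrow> e \<subseteq> V" using sg_edge[OF sg] by blast

lemma img_eq: "X \<subseteq> V \<Longrightarrow> Y \<subseteq> V \<Longrightarrow> f ` X = f ` Y \<longleftrightarrow> X = Y"
  using inj by (simp add: inj_on_image_eq_iff)

lemma inE2: assumes X: "X \<subseteq> V" shows "f ` X \<in> E2 \<longleftrightarrow> X \<in> E"
proof
  assume "f ` X \<in> E2"
  then obtain e where e: "e \<in> E" "f ` X = f ` e" by blast
  then have "X = e" using img_eq[OF X EV[OF e(1)]] by simp
  then show "X \<in> E" using e by simp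
qed simp

lemma inE2': "x \<in> V \<Longrightarrow> y \<in> V \<Longrightarrow> {f x, f y} \<in> E2 \<longleftrightarrow> {x,y} \<in> E"
  using inE2[of "{x,y}"] by simp

lemma gf: "x \<in> V \<Longrightarrow> g (f x) = x" using inj by (simp add: inv_into_f_f)

lemma sg2: "simple_graph V2 E2"
  unfolding simple_graph_def
proof (intro conjI ballI)
  show "finite V2" using sg_fin[OF sg] by simp
next
  fix e2 assume "e2 \<in> E2"
  then obtain e where e: "e \<in> E" "e2 = f ` e" by auto
  then obtain x y where "e = {x,y}" "x \<noteq> y" "x \<in> V" "y \<in> V" using sg_edge[OF sg] by blast
  then show "\<exists>x y. e2 = {x, y} \<and> x \<noteq> y \<and> x \<in> V2 \<and> y \<in> V2"
    using e inj by (intro exI[of _ "f x"] exI[of _ "f y"]) (auto simp: inj_on_def)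
qed

lemma nb2: assumes z: "z \<in> V" shows "neighbours V2 E2 (f z) = f ` neighbours V E z"
proof
  show "neighbours V2 E2 (f z) \<subseteq> f ` neighbours V E z"
  proof
    fix w assume "w \<in> neighbours V2 E2 (f z)"
    then obtain u where u: "u \<in> V" "w = f u" "f u \<noteq> f z" "{f u, f z} \<in> E2" unfolding nb_iff by auto
    then have "u \<in> neighbours V E z" using inE2'[OF u(1) z] unfolding nb_iff by auto
    then show "w \<in> f ` neighbours V E z" using u by auto
  qed
next
  show "f ` neighbours V E z \<subseteq> neighbours V2 E2 (f z)"
  proof
    fix w assume "w \<in> f ` neighbours V E z"
    then obtain u where u: "u \<in> neighbours V E z" "w = f u" by auto
    then have "u \<in> V" "u \<noteq> z" "{u,z} \<in> E" unfolding nb_iff by auto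
    then show "w \<in> neighbours V2 E2 (f z)" using u inE2' z inj unfolding nb_iff by (auto simp: inj_on_def)
  qed
qed

lemma nbV: "neighbours V E z \<subseteq> V" unfolding neighbours_def by auto

lemma deg2: "z \<in> V \<Longrightarrow> degree V2 E2 (f z) = degree V E z"
  unfolding degree_def nb2 using inj_on_subset[OF inj nbV] by (simp add: card_image)

lemma maxdeg2: "max_degree_le V E k \<Longrightarrow> max_degree_le V2 E2 k"
  unfolding max_degree_le_def using deg2 by auto

lemma card2: "card V2 = card V" "card E2 = card E"
proof -
  show "card V2 = card V" using inj by (simp add: card_image)
  have "inj_on (\<lambda>e. f ` e) E" unfolding inj_on_def using img_eq EV by metis
  then show "card E2 = card E" by (simp add: card_image)
qed

lemma fan2: "has_4fan V2 E2 \<Longrightarrow> has_4fan V E"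
proof -
  assume "has_4fan V2 E2"
  then obtain c u1 u2 u3 u4 u5 where hh: "{c, u1, u2, u3, u4, u5} \<subseteq> V2 \<and> distinct [c, u1, u2, u3, u4, u5] \<and>
     {c, u1} \<in> E2 \<and> {c, u2} \<in> E2 \<and> {c, u3} \<in> E2 \<and> {c, u4} \<in> E2 \<and> {c, u5} \<in> E2 \<and>
     {u1, u2} \<in> E2 \<and> {u2, u3} \<in> E2 \<and> {u3, u4} \<in> E2 \<and> {u4, u5} \<in> E2"
    unfolding has_4fan_def by (elim exE) (erule that)
  have h: "{c, u1, u2, u3, u4, u5} \<subseteq> V2" "distinct [c, u1, u2, u3, u4, u5]"
     "{c, u1} \<in> E2" "{c, u2} \<in> E2" "{c, u3} \<in> E2" "{c, u4} \<in> E2" "{c, u5} \<in> E2"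
     "{u1, u2} \<in> E2" "{u2, u3} \<in> E2" "{u3, u4} \<in> E2" "{u4, u5} \<in> E2"
    using hh by (simp_all only:)
  have pre: "g x \<in> V \<and> x = f (g x)" if "x \<in> V2" for x
    using that by (simp add: inv_into_into f_inv_into_f)
  have hV: "c \<in> V2" "u1 \<in> V2" "u2 \<in> V2" "u3 \<in> V2" "u4 \<in> V2" "u5 \<in> V2" using h(1) by (simp_all only: insert_subset)
  obtain c' where c: "c' \<in> V" "c = f c'" using pre[OF hV(1)] by blast
  obtain u1' where 1: "u1' \<in> V" "u1 = f u1'" using pre[OF hV(2)] by blast
  obtain u2' where 2: "u2' \<in> V" "u2 = f u2'" using pre[OF hV(3)] by blast
  obtain u3' where 3: "u3' \<in> V" "u3 = f u3'" using pre[OF hV(4)] by blast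
  obtain u4' where 4: "u4' \<in> V" "u4 = f u4'" using pre[OF hV(5)] by blast
  obtain u5' where 5: "u5' \<in> V" "u5 = f u5'" using pre[OF hV(6)] by blast
  have "distinct (map f [c', u1', u2', u3', u4', u5'])" using h(2) unfolding c(2) 1(2) 2(2) 3(2) 4(2) 5(2)
    by simp
  then have d: "distinct [c', u1', u2', u3', u4', u5']" by (simp only: distinct_map)
  have e: "{c', u1'} \<in> E" "{c', u2'} \<in> E" "{c', u3'} \<in> E" "{c', u4'} \<in> E" "{c', u5'} \<in> E"
     "{u1', u2'} \<in> E" "{u2', u3'} \<in> E" "{u3', u4'} \<in> E" "{u4', u5'} \<in> E"
    using h(3-11) inE2' c(1) 1(1) 2(1) 3(1) 4(1) 5(1) unfolding c(2) 1(2) 2(2) 3(2) 4(2) 5(2) by simp_all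
  have s: "{c', u1', u2', u3', u4', u5'} \<subseteq> V" using c 1 2 3 4 5 by simp
  show "has_4fan V E" unfolding has_4fan_def
    apply (rule exI[of _ c'], rule exI[of _ u1'], rule exI[of _ u2'], rule exI[of _ u3'], rule exI[of _ u4'], rule exI[of _ u5'])
    using s d e by (intro conjI)
qed

lemma colour_back: assumes tc: "total_colouring V2 E2 k cv ce"
  shows "total_colouring V E k (cv \<circ> f) (\<lambda>e. ce (f ` e))"
proof -
  note tcs = tc[unfolded total_colouring_def]
  note t1 = conjunct1[OF tcs] and t2 = conjunct1[OF conjunct2[OF tcs]]
    and t3 = conjunct1[OF conjunct2[OF conjunct2[OF tcs]]]
    and t4 = conjunct1[OF conjunct2[OF conjunct2[OF conjunct2[OF tcs]]]]
    and t5 = conjunct2[OF conjunct2[OF conjunct2[OF conjunct2[OF tcs]]]]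
  have s1: "\<forall>v\<in>V. (cv \<circ> f) v \<in> {1..k}"
  proof
    fix v assume "v \<in> V" then have "f v \<in> V2" by simp
    then show "(cv \<circ> f) v \<in> {1..k}" using bspec[OF t1] by simp
  qed
  have s2: "\<forall>e\<in>E. ce (f ` e) \<in> {1..k}"
  proof
    fix e assume "e \<in> E" then have "f ` e \<in> E2" by simp
    then show "ce (f ` e) \<in> {1..k}" using bspec[OF t2] by simp
  qed
  have s3: "\<forall>x\<in>V. \<forall>y\<in>V. x \<noteq> y \<and> {x, y} \<in> E \<longrightarrow> (cv \<circ> f) x \<noteq> (cv \<circ> f) y"
  proof (intro ballI impI)
    fix x y assume x: "x \<in> V" and y: "y \<in> V" and xy: "x \<noteq> y \<and> {x, y} \<in> E"
    have "f x \<noteq> f y" using inj x y xy unfolding inj_on_def by blast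
    moreover have "{f x, f y} \<in> E2" using inE2'[OF x y] xy by simp
    moreover have "f x \<in> V2" "f y \<in> V2" using x y by simp_all
    ultimately show "(cv \<circ> f) x \<noteq> (cv \<circ> f) y" using bspec[OF bspec[OF t3]] by simp
  qed
  have s4: "\<forall>e\<in>E. \<forall>e'\<in>E. e \<noteq> e' \<and> e \<inter> e' \<noteq> {} \<longrightarrow> ce (f ` e) \<noteq> ce (f ` e')"
  proof (intro ballI impI)
    fix e e' assume e: "e \<in> E" and e': "e' \<in> E" and ne: "e \<noteq> e' \<and> e \<inter> e' \<noteq> {}"
    have "f ` e \<noteq> f ` e'" using ne img_eq[OF EV[OF e] EV[OF e']] by simp
    moreover have "f ` e \<inter> f ` e' \<noteq> {}" using ne by blast
    moreover have "f ` e \<in> E2" "f ` e' \<in> E2" using e e' by simp_all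
    ultimately show "ce (f ` e) \<noteq> ce (f ` e')" using bspec[OF bspec[OF t4]] by simp
  qed
  have s5: "\<forall>e\<in>E. \<forall>v\<in>e. (cv \<circ> f) v \<noteq> ce (f ` e)"
  proof (intro ballI)
    fix e v assume e: "e \<in> E" and v: "v \<in> e"
    have "f ` e \<in> E2" using e by simp
    moreover have "f v \<in> f ` e" using v by simp
    ultimately show "(cv \<circ> f) v \<noteq> ce (f ` e)" using bspec[OF bspec[OF t5]] by simp
  qed
  show ?thesis unfolding total_colouring_def using s1 s2 s3 s4 s5 by (intro conjI)
qed

end

lemma img_compr: "{h (k n) | n. True} = h ` {k n | n. True}" by auto
lemma compr_img: "{h x | x. x \<in> A} = h ` A" by auto

context gmap begin

definition rot2 :: "('a \<Rightarrow> 'a \<Rightarrow> 'a) \<Rightarrow> 'b \<Rightarrow> 'b \<Rightarrow> 'b" where "rot2 rot x y = f (rot (g x) (g y))"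
abbreviation "F \<equiv> map_prod f f"

lemma rot2_f: "z \<in> V \<Longrightarrow> x \<in> V \<Longrightarrow> rot2 rot (f z) (f x) = f (rot z x)"
  unfolding rot2_def using gf by simp

lemma rs2: assumes rs: "rotation_system V E rot" shows "rotation_system V2 E2 (rot2 rot)"
  unfolding rotation_system_def
proof (intro ballI)
  fix z2 assume "z2 \<in> V2"
  then obtain z where z: "z \<in> V" "z2 = f z" by blast
  let ?N = "neighbours V E z"
  have N2: "neighbours V2 E2 z2 = f ` ?N" using nb2[OF z(1)] z(2) by simp
  have NV: "?N \<subseteq> V" by (rule nbV)
  have r: "rot2 rot z2 (f x) = f (rot z x)" if "x \<in> ?N" for x using rot2_f[OF z(1)] NV that z(2) by blast
  have m: "\<forall>x\<in>?N. rot z x \<in> ?N" and i: "inj_on (rot z) ?N" and c: "\<forall>x\<in>?N. \<forall>y\<in>?N. \<exists>n. (rot z ^^ n) x = y"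
    using rs z(1) unfolding rotation_system_def by auto
  have pw: "(rot2 rot z2 ^^ n) (f x) = f ((rot z ^^ n) x) \<and> (rot z ^^ n) x \<in> ?N" if "x \<in> ?N" for x n
  proof (induction n)
    case 0 then show ?case using that by simp
  next
    case (Suc n) then show ?case using r m by simp
  qed
  show "(\<forall>x\<in>neighbours V2 E2 z2. rot2 rot z2 x \<in> neighbours V2 E2 z2) \<and>
          inj_on (rot2 rot z2) (neighbours V2 E2 z2) \<and>
          (\<forall>x\<in>neighbours V2 E2 z2. \<forall>y\<in>neighbours V2 E2 z2. \<exists>n. (rot2 rot z2 ^^ n) x = y)"
    unfolding N2
  proof (intro conjI ballI)
    fix x2 assume "x2 \<in> f ` ?N"
    then obtain x where "x \<in> ?N" "x2 = f x" by blast
    then show "rot2 rot z2 x2 \<in> f ` ?N" using r m by simp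
  next
    show "inj_on (rot2 rot z2) (f ` ?N)"
    proof (rule inj_onI)
      fix x2 y2 assume "x2 \<in> f ` ?N" "y2 \<in> f ` ?N" and e: "rot2 rot z2 x2 = rot2 rot z2 y2"
      then obtain x y where xy: "x \<in> ?N" "x2 = f x" "y \<in> ?N" "y2 = f y" by blast
      then have "f (rot z x) = f (rot z y)" using e r by simp
      moreover have "rot z x \<in> V" "rot z y \<in> V" using m xy NV by auto
      ultimately have "rot z x = rot z y" using inj unfolding inj_on_def by blast
      then have "x = y" using i xy unfolding inj_on_def by blast
      then show "x2 = y2" using xy by simp
    qed
  next
    fix x2 y2 assume "x2 \<in> f ` ?N" "y2 \<in> f ` ?N"
    then obtain x y where xy: "x \<in> ?N" "x2 = f x" "y \<in> ?N" "y2 = f y" by blast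
    then obtain n where "(rot z ^^ n) x = y" using c by blast
    then show "\<exists>n. (rot2 rot z2 ^^ n) x2 = y2" using pw[OF xy(1), of n] xy by metis
  qed
qed

lemma darts2: "darts V2 E2 = F ` darts V E"
proof
  show "darts V2 E2 \<subseteq> F ` darts V E"
  proof
    fix d2 assume d2: "d2 \<in> darts V2 E2"
    obtain x2 y2 where xy2: "d2 = (x2,y2)" by (cases d2)
    then have h: "x2 \<in> V2" "y2 \<in> V2" "x2 \<noteq> y2" "{x2,y2} \<in> E2" using d2 by (simp_all add: darts_iff)
    then obtain x y where xy: "x \<in> V" "x2 = f x" "y \<in> V" "y2 = f y" by blast
    then have "(x,y) \<in> darts V E" using h inE2'[OF xy(1,3)] by (auto simp: darts_iff)
    then show "d2 \<in> F ` darts V E" using xy xy2 by force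
  qed
next
  show "F ` darts V E \<subseteq> darts V2 E2"
  proof
    fix d2 assume "d2 \<in> F ` darts V E"
    then obtain x y where xy: "(x,y) \<in> darts V E" "d2 = (f x, f y)" by auto
    then have h: "x \<in> V" "y \<in> V" "x \<noteq> y" "{x,y} \<in> E" by (simp_all add: darts_iff)
    have "f x \<noteq> f y" using h inj unfolding inj_on_def by blast
    then show "d2 \<in> darts V2 E2" using h xy inE2'[OF h(1,2)] by (simp add: darts_iff)
  qed
qed

lemma Finj: "inj_on F (darts V E)"
proof (rule inj_onI)
  fix d e assume d: "d \<in> darts V E" and e: "e \<in> darts V E" and eq: "F d = F e"
  obtain x y where dd: "d = (x,y)" by (cases d)
  obtain x' y' where ee: "e = (x',y')" by (cases e)
  have "x \<in> V" "y \<in> V" "x' \<in> V" "y' \<in> V" using d e dd ee by (simp_all add: darts_iff)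
  moreover have "f x = f x'" "f y = f y'" using eq dd ee by simp_all
  ultimately have "x = x'" "y = y'" using inj unfolding inj_on_def by blast+
  then show "d = e" using dd ee by simp
qed

lemma faces2: assumes rs: "rotation_system V E rot"
  shows "card (faces V2 E2 (rot2 rot)) = card (faces V E rot)"
proof -
  interpret O: fperm "darts V E" "face_step rot" by (rule fperm_fs[OF sg rs])
  have step: "face_step (rot2 rot) (F d) = F (face_step rot d)" if "d \<in> darts V E" for d
  proof -
    obtain x y where "d = (x,y)" by (cases d)
    then show ?thesis using that rot2_f by (auto simp: face_step_def darts_iff)
  qed
  have pw: "(face_step (rot2 rot) ^^ n) (F d) = F ((face_step rot ^^ n) d)" if "d \<in> darts V E" for d n
    by (induction n) (use step O.pow_in[OF that] in auto)
  have fc: "face (rot2 rot) (F d) = F ` face rot d" if "d \<in> darts V E" for d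
  proof -
    have "face (rot2 rot) (F d) = {F ((face_step rot ^^ n) d) | n. True}"
      unfolding face_def by (simp only: pw[OF that])
    also have "\<dots> = F ` face rot d" unfolding face_def by (rule img_compr)
    finally show ?thesis .
  qed
  have "faces V2 E2 (rot2 rot) = (\<lambda>d. face (rot2 rot) (F d)) ` darts V E"
    unfolding faces_def darts2 by (simp only: image_image)
  also have "\<dots> = (\<lambda>d. F ` face rot d) ` darts V E" using fc by (rule image_cong[OF refl])
  also have "\<dots> = (\<lambda>S. F ` S) ` faces V E rot" unfolding faces_def by (simp only: image_image)
  finally have "faces V2 E2 (rot2 rot) = (\<lambda>S. F ` S) ` faces V E rot" .
  moreover have "inj_on (\<lambda>S. F ` S) (faces V E rot)"
  proof (rule inj_onI)
    fix S T assume S: "S \<in> faces V E rot" and T: "T \<in> faces V E rot" and e: "F ` S = F ` T"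
    have "S \<subseteq> darts V E" "T \<subseteq> darts V E" using S T O.orb_sub unfolding faces_def face_orb[symmetric] by auto
    then show "S = T" using e Finj by (simp add: inj_on_image_eq_iff)
  qed
  ultimately show ?thesis by (simp add: card_image)
qed

lemma iso2: "card (isolated V2 E2) = card (isolated V E)"
proof -
  have "isolated V2 E2 = f ` isolated V E"
  proof
    show "isolated V2 E2 \<subseteq> f ` isolated V E"
    proof
      fix z2 assume z2: "z2 \<in> isolated V2 E2"
      then have "z2 \<in> V2" unfolding isolated_def by simp
      then obtain z where z: "z \<in> V" "z2 = f z" by blast
      then have "f ` neighbours V E z = {}" using z2 nb2[OF z(1)] unfolding isolated_def by simp
      then have "z \<in> isolated V E" using z(1) unfolding isolated_def by simp
      then show "z2 \<in> f ` isolated V E" using z(2) by (rule rev_image_eqI)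
    qed
  next
    show "f ` isolated V E \<subseteq> isolated V2 E2"
    proof
      fix z2 assume "z2 \<in> f ` isolated V E"
      then obtain z where z: "z \<in> isolated V E" "z2 = f z" by blast
      then have zV: "z \<in> V" and "neighbours V E z = {}" unfolding isolated_def by simp_all
      then have "neighbours V2 E2 z2 = {}" using nb2[OF zV] z(2) by simp
      then show "z2 \<in> isolated V2 E2" using zV z(2) unfolding isolated_def by simp
    qed
  qed
  moreover have "isolated V E \<subseteq> V" unfolding isolated_def by auto
  ultimately show ?thesis using inj_on_subset[OF inj] by (simp add: card_image)
qed

lemma reach2: assumes x: "x \<in> V"
  shows "(\<lambda>a b. {a,b} \<in> E2)\<^sup>*\<^sup>* (f x) w \<longleftrightarrow> (\<exists>y\<in>V. w = f y \<and> (\<lambda>a b. {a,b} \<in> E)\<^sup>*\<^sup>* x y)"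
proof
  assume "(\<lambda>a b. {a,b} \<in> E2)\<^sup>*\<^sup>* (f x) w"
  then show "\<exists>y\<in>V. w = f y \<and> (\<lambda>a b. {a,b} \<in> E)\<^sup>*\<^sup>* x y"
  proof (induction rule: rtranclp_induct)
    case base then show ?case using x by blast
  next
    case (step w w')
    then obtain y where y: "y \<in> V" "w = f y" "(\<lambda>a b. {a,b} \<in> E)\<^sup>*\<^sup>* x y" by blast
    have "w' \<in> V2" using step(2) edge_in_V[OF sg2] by blast
    then obtain y' where y': "y' \<in> V" "w' = f y'" by blast
    have "{y,y'} \<in> E" using step(2) y y' inE2' by simp
    then have "(\<lambda>a b. {a,b} \<in> E)\<^sup>*\<^sup>* x y'" using y(3) by (simp add: rtranclp.rtrancl_into_rtrancl)
    then show ?case using y' by blast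
  qed
next
  assume "\<exists>y\<in>V. w = f y \<and> (\<lambda>a b. {a,b} \<in> E)\<^sup>*\<^sup>* x y"
  then obtain y where y: "y \<in> V" "w = f y" "(\<lambda>a b. {a,b} \<in> E)\<^sup>*\<^sup>* x y" by blast
  have "(\<lambda>a b. {a,b} \<in> E2)\<^sup>*\<^sup>* (f x) (f y)" using y(3)
  proof (induction rule: rtranclp_induct)
    case base then show ?case by simp
  next
    case (step y z)
    then have "f ` {y, z} \<in> E2" by (intro imageI) simp
    then have "{f y, f z} \<in> E2" by simp
    then show ?case using step by (meson rtranclp.rtrancl_into_rtrancl)
  qed
  then show "(\<lambda>a b. {a,b} \<in> E2)\<^sup>*\<^sup>* (f x) w" using y by simp
qed

lemma comp2: "card (components V2 E2) = card (components V E)"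
proof -
  let ?cl = "\<lambda>x. {y \<in> V. (\<lambda>a b. {a,b} \<in> E)\<^sup>*\<^sup>* x y}"
  have cl2: "{w \<in> V2. (\<lambda>a b. {a,b} \<in> E2)\<^sup>*\<^sup>* (f x) w} = f ` ?cl x" if xV: "x \<in> V" for x
  proof
    show "{w \<in> V2. (\<lambda>a b. {a,b} \<in> E2)\<^sup>*\<^sup>* (f x) w} \<subseteq> f ` ?cl x"
    proof
      fix w assume "w \<in> {w \<in> V2. (\<lambda>a b. {a,b} \<in> E2)\<^sup>*\<^sup>* (f x) w}"
      then have "(\<lambda>a b. {a,b} \<in> E2)\<^sup>*\<^sup>* (f x) w" by simp
      then obtain y where "y \<in> V" "w = f y" "(\<lambda>a b. {a,b} \<in> E)\<^sup>*\<^sup>* x y" using reach2[OF xV] by blast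
      then show "w \<in> f ` ?cl x" by simp
    qed
  next
    show "f ` ?cl x \<subseteq> {w \<in> V2. (\<lambda>a b. {a,b} \<in> E2)\<^sup>*\<^sup>* (f x) w}"
    proof
      fix w assume "w \<in> f ` ?cl x"
      then obtain y where y: "y \<in> V" "w = f y" "(\<lambda>a b. {a,b} \<in> E)\<^sup>*\<^sup>* x y" by blast
      then have "(\<lambda>a b. {a,b} \<in> E2)\<^sup>*\<^sup>* (f x) w" using reach2[OF xV] by blast
      then show "w \<in> {w \<in> V2. (\<lambda>a b. {a,b} \<in> E2)\<^sup>*\<^sup>* (f x) w}" using y by simp
    qed
  qed
  let ?cl2 = "\<lambda>w. {w' \<in> V2. (\<lambda>a b. {a,b} \<in> E2)\<^sup>*\<^sup>* w w'}"
  have C: "components V E = ?cl ` V" unfolding components_def by (rule compr_img)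
  have C2: "components V2 E2 = ?cl2 ` V2" unfolding components_def by (rule compr_img)
  have "?cl2 ` V2 = (\<lambda>x. ?cl2 (f x)) ` V" by (simp only: image_image)
  also have "\<dots> = (\<lambda>x. f ` ?cl x) ` V" using cl2 by (rule image_cong[OF refl])
  also have "\<dots> = (\<lambda>S. f ` S) ` (?cl ` V)" by (simp only: image_image)
  finally have "components V2 E2 = (\<lambda>S. f ` S) ` components V E" unfolding C C2 .
  moreover have "inj_on (\<lambda>S. f ` S) (components V E)"
  proof (rule inj_onI)
    fix S T assume S: "S \<in> components V E" and T: "T \<in> components V E" and e: "f ` S = f ` T"
    have "S \<subseteq> V" "T \<subseteq> V" using S T unfolding C by auto
    then show "S = T" using img_eq e by simp
  qed
  ultimately show ?thesis by (simp add: card_image)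
qed

lemma planar2: assumes "planar V E" shows "planar V2 E2"
proof -
  obtain rot where pr: "plane_rotation V E rot" using assms unfolding planar_def by blast
  then have rs: "rotation_system V E rot" unfolding plane_rotation_def by simp
  have "plane_rotation V2 E2 (rot2 rot)"
    using pr rs2[OF rs] faces2[OF rs] iso2 comp2 card2 unfolding plane_rotation_def by simp
  then show ?thesis unfolding planar_def by blast
qed

end

lemma deg_mono: assumes "simple_graph V E" "E' \<subseteq> E" shows "degree V E' z \<le> degree V E z"
proof -
  have "neighbours V E' z \<subseteq> neighbours V E z" using assms(2) unfolding neighbours_def by auto
  moreover have "finite (neighbours V E z)" using sg_fin[OF assms(1)] unfolding neighbours_def by simp
  ultimately show ?thesis unfolding degree_def by (rule card_mono[rotated])
qed

lemma fan_mono: assumes "has_4fan V E'" "E' \<subseteq> E" shows "has_4fan V E"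
proof -
  obtain c u1 u2 u3 u4 u5 where hh: "{c, u1, u2, u3, u4, u5} \<subseteq> V \<and> distinct [c, u1, u2, u3, u4, u5] \<and>
     {c, u1} \<in> E' \<and> {c, u2} \<in> E' \<and> {c, u3} \<in> E' \<and> {c, u4} \<in> E' \<and> {c, u5} \<in> E' \<and>
     {u1, u2} \<in> E' \<and> {u2, u3} \<in> E' \<and> {u3, u4} \<in> E' \<and> {u4, u5} \<in> E'"
    using assms(1) unfolding has_4fan_def by (elim exE) (erule that)
  have "{c, u1, u2, u3, u4, u5} \<subseteq> V \<and> distinct [c, u1, u2, u3, u4, u5] \<and>
     {c, u1} \<in> E \<and> {c, u2} \<in> E \<and> {c, u3} \<in> E \<and> {c, u4} \<in> E \<and> {c, u5} \<in> E \<and>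
     {u1, u2} \<in> E \<and> {u2, u3} \<in> E \<and> {u3, u4} \<in> E \<and> {u4, u5} \<in> E"
    using hh assms(2) by (simp only: subset_iff) blast
  then show ?thesis unfolding has_4fan_def
    by (intro exI[of _ c] exI[of _ u1] exI[of _ u2] exI[of _ u3] exI[of _ u4] exI[of _ u5])
qed

lemma reduce_edge:
  assumes mc: "minimal_counterexample V E" and ab: "{a,b} \<in> E"
  shows "total_colourable V (E - {{a,b}}) 9"
proof -
  have sg: "simple_graph V E" and pl: "planar V E" and md: "max_degree_eq V E 8" and nf: "\<not> has_4fan V E"
    and mi: "\<forall>(VH :: nat set) EH. simple_graph VH EH \<and> planar VH EH \<and> max_degree_le VH EH 8 \<and>
        \<not> has_4fan VH EH \<and> card VH + card EH < card V + card E \<longrightarrow> total_colourable VH EH 9"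
    using mc unfolding minimal_counterexample_def by blast+
  let ?E' = "E - {{a,b}}"
  have sg': "simple_graph V ?E'" by (rule sg_del[OF sg])
  obtain rot where "plane_rotation V E rot" using pl unfolding planar_def by blast
  then have "plane_rotation V ?E' (delrot rot a b)" using plane_del[OF sg _ ab] by blast
  then have pl': "planar V ?E'" unfolding planar_def by blast
  have md': "max_degree_le V ?E' 8" using md deg_mono[OF sg, of ?E'] unfolding max_degree_eq_def max_degree_le_def
    by (meson Diff_subset le_trans)
  have nf': "\<not> has_4fan V ?E'" using nf fan_mono[of V ?E' E] by blast
  have cE: "card ?E' < card E" using card_Diff1_less[OF sg_finE[OF sg] ab] .
  obtain f :: "'a \<Rightarrow> nat" and n where "f ` V = {i. i < n}" "inj_on f V"
    using finite_imp_inj_to_nat_seg[OF sg_fin[OF sg]] by blast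
  then have inj: "inj_on f V" by simp
  interpret M: gmap V ?E' f using sg' inj by unfold_locales
  have nf2: "\<not> has_4fan (f ` V) ((\<lambda>e. f ` e) ` ?E')" using M.fan2 nf' by blast
  have cs: "card (f ` V) + card ((\<lambda>e. f ` e) ` ?E') < card V + card E" using M.card2 cE by simp
  have "total_colourable (f ` V) ((\<lambda>e. f ` e) ` ?E') 9"
    using mi[rule_format, OF conjI[OF M.sg2 conjI[OF M.planar2[OF pl'] conjI[OF M.maxdeg2[OF md'] conjI[OF nf2 cs]]]]] .
  then obtain cv ce where "total_colouring (f ` V) ((\<lambda>e. f ` e) ` ?E') 9 cv ce"
    unfolding total_colourable_def by blast
  then have "total_colouring V ?E' 9 (cv \<circ> f) (\<lambda>e. ce (f ` e))" by (rule M.colour_back)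
  then show ?thesis unfolding total_colourable_def by blast
qed

definition inc :: "'a set set \<Rightarrow> 'a \<Rightarrow> 'a set set" where "inc E z = {e \<in> E. z \<in> e}"

definition good :: "'a set \<Rightarrow> 'a set set \<Rightarrow> ('a \<Rightarrow> nat) \<Rightarrow> ('a set \<Rightarrow> nat) \<Rightarrow> 'a set \<Rightarrow> bool" where
  "good V E cv ce X \<longleftrightarrow> (\<forall>e\<in>E. ce e \<le> 9) \<and> (\<forall>z\<in>V-X. cv z \<in> {1..9}) \<and>
     (\<forall>a\<in>V-X. \<forall>b\<in>V-X. a \<noteq> b \<and> {a,b} \<in> E \<longrightarrow> cv a \<noteq> cv b) \<and>
     (\<forall>z\<in>V. \<forall>e\<in>inc E z. \<forall>e'\<in>inc E z. e \<noteq> e' \<and> ce e \<noteq> 0 \<longrightarrow> ce e \<noteq> ce e') \<and>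
     (\<forall>z\<in>V-X. \<forall>e\<in>inc E z. cv z \<noteq> ce e)"

lemma inc_iff: "e \<in> inc E z \<longleftrightarrow> e \<in> E \<and> z \<in> e" unfolding inc_def by simp

lemma inc_sub_nb: assumes sg: "simple_graph V E" shows "inc E z \<subseteq> (\<lambda>y. {z,y}) ` neighbours V E z"
proof
  fix e assume "e \<in> inc E z"
  then have e: "e \<in> E" "z \<in> e" unfolding inc_iff by simp_all
  then obtain p q where pq: "e = {p,q}" "p \<noteq> q" "p \<in> V" "q \<in> V" using sg_edge[OF sg] by blast
  show "e \<in> (\<lambda>y. {z,y}) ` neighbours V E z"
  proof (cases "z = p")
    case True
    then have "q \<in> neighbours V E z" using pq e unfolding nb_iff by (simp add: insert_commute)
    then show ?thesis using pq True by blast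
  next
    case False
    then have zq: "z = q" using e pq by simp
    then have "p \<in> neighbours V E z" using pq e unfolding nb_iff by simp
    then show ?thesis using pq zq by (auto simp: insert_commute)
  qed
qed

lemma card_inc: assumes sg: "simple_graph V E" shows "card (inc E z) \<le> degree V E z"
proof -
  have fN: "finite (neighbours V E z)" using sg_fin[OF sg] unfolding neighbours_def by simp
  have "card (inc E z) \<le> card ((\<lambda>y. {z,y}) ` neighbours V E z)"
    using inc_sub_nb[OF sg] fN by (intro card_mono) auto
  also have "\<dots> \<le> card (neighbours V E z)" by (rule card_image_le[OF fN])
  finally show ?thesis unfolding degree_def .
qed

lemma fin_inc: assumes "simple_graph V E" shows "finite (inc E z)"
proof -
  have "finite E" using sg_finE[OF assms] .
  then show ?thesis unfolding inc_def by simp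
qed

lemma good_init:
  assumes sg: "simple_graph V E" and uv: "{u,v} \<in> E" and uX: "u \<in> X"
    and tc: "total_colouring V (E - {{u,v}}) 9 cv ce"
  shows "good V E cv (ce({u,v} := 0)) X"
proof -
  note tcs = tc[unfolded total_colouring_def]
  note t1 = conjunct1[OF tcs] and t2 = conjunct1[OF conjunct2[OF tcs]]
    and t3 = conjunct1[OF conjunct2[OF conjunct2[OF tcs]]]
    and t4 = conjunct1[OF conjunct2[OF conjunct2[OF conjunct2[OF tcs]]]]
    and t5 = conjunct2[OF conjunct2[OF conjunct2[OF conjunct2[OF tcs]]]]
  let ?c = "ce({u,v} := 0)"
  have g1: "\<forall>e\<in>E. ?c e \<le> 9" using t2 by auto
  have g2: "\<forall>z\<in>V-X. cv z \<in> {1..9}" using t1 by auto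
  have g3: "\<forall>a\<in>V-X. \<forall>b\<in>V-X. a \<noteq> b \<and> {a,b} \<in> E \<longrightarrow> cv a \<noteq> cv b"
  proof (intro ballI impI)
    fix a b assume a: "a \<in> V - X" and b: "b \<in> V - X" and ab: "a \<noteq> b \<and> {a,b} \<in> E"
    have "{a,b} \<noteq> {u,v}" using a b uX by (auto simp: doubleton_eq_iff)
    then show "cv a \<noteq> cv b" using t3 a b ab by simp
  qed
  have g4: "\<forall>z\<in>V. \<forall>e\<in>inc E z. \<forall>e'\<in>inc E z. e \<noteq> e' \<and> ?c e \<noteq> 0 \<longrightarrow> ?c e \<noteq> ?c e'"
  proof (intro ballI impI)
    fix z e e' assume z: "z \<in> V" and e: "e \<in> inc E z" and e': "e' \<in> inc E z" and h: "e \<noteq> e' \<and> ?c e \<noteq> 0"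
    then have eu: "e \<noteq> {u,v}" by auto
    show "?c e \<noteq> ?c e'"
    proof (cases "e' = {u,v}")
      case True then show ?thesis using h eu by simp
    next
      case False
      then have "e \<in> E - {{u,v}}" "e' \<in> E - {{u,v}}" "e \<inter> e' \<noteq> {}" using e e' eu unfolding inc_iff by auto
      then have "ce e \<noteq> ce e'" using bspec[OF bspec[OF t4]] h by blast
      then show ?thesis using eu False by simp
    qed
  qed
  have g5: "\<forall>z\<in>V-X. \<forall>e\<in>inc E z. cv z \<noteq> ?c e"
  proof (intro ballI)
    fix z e assume z: "z \<in> V - X" and e: "e \<in> inc E z"
    show "cv z \<noteq> ?c e"
    proof (cases "e = {u,v}")
      case True then show ?thesis using t1 z by auto
    next
      case False
      then have "e \<in> E - {{u,v}}" "z \<in> e" using e unfolding inc_iff by auto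
      then show ?thesis using t5 False by simp
    qed
  qed
  show ?thesis unfolding good_def using g1 g2 g3 g4 g5 by (intro conjI)
qed

lemma good_col:
  assumes g: "good V E cv ce X" and c: "c \<in> {1..9}"
    and ok: "\<And>z. z \<in> e \<Longrightarrow> (\<forall>e'\<in>inc E z. e' \<noteq> e \<longrightarrow> ce e' \<noteq> c) \<and> (z \<notin> X \<longrightarrow> cv z \<noteq> c)"
  shows "good V E cv (ce(e := c)) X"
proof -
  note gs = g[unfolded good_def]
  note t1 = conjunct1[OF gs] and t2 = conjunct1[OF conjunct2[OF gs]]
    and t3 = conjunct1[OF conjunct2[OF conjunct2[OF gs]]]
    and t4 = conjunct1[OF conjunct2[OF conjunct2[OF conjunct2[OF gs]]]]
    and t5 = conjunct2[OF conjunct2[OF conjunct2[OF conjunct2[OF gs]]]]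
  let ?c = "ce(e := c)"
  have g1: "\<forall>e\<in>E. ?c e \<le> 9" using t1 c by auto
  have g4: "\<forall>z\<in>V. \<forall>e1\<in>inc E z. \<forall>e2\<in>inc E z. e1 \<noteq> e2 \<and> ?c e1 \<noteq> 0 \<longrightarrow> ?c e1 \<noteq> ?c e2"
  proof (intro ballI impI)
    fix z e1 e2 assume z: "z \<in> V" and e1: "e1 \<in> inc E z" and e2: "e2 \<in> inc E z" and h: "e1 \<noteq> e2 \<and> ?c e1 \<noteq> 0"
    show "?c e1 \<noteq> ?c e2"
    proof (cases "e1 = e")
      case True
      then have "z \<in> e" using e1 unfolding inc_iff by simp
      then have "ce e2 \<noteq> c" using ok e2 h True by blast
      moreover have "e2 \<noteq> e" using h True by blast
      ultimately show ?thesis using True by simp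
    next
      case False
      show ?thesis
      proof (cases "e2 = e")
        case True
        then have "z \<in> e" using e2 unfolding inc_iff by simp
        then have "ce e1 \<noteq> c" using ok e1 h True by blast
        then show ?thesis using True False by simp
      next
        case F2: False
        then show ?thesis using False h bspec[OF bspec[OF bspec[OF t4 z] e1] e2] by simp
      qed
    qed
  qed
  have g5: "\<forall>z\<in>V-X. \<forall>e1\<in>inc E z. cv z \<noteq> ?c e1"
  proof (intro ballI)
    fix z e1 assume z: "z \<in> V - X" and e1: "e1 \<in> inc E z"
    show "cv z \<noteq> ?c e1"
    proof (cases "e1 = e")
      case True
      then have "z \<in> e" using e1 unfolding inc_iff by simp
      then show ?thesis using ok True z by simp
    next
      case False then show ?thesis using bspec[OF bspec[OF t5 z] e1] by simp
    qed
  qed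
  show ?thesis unfolding good_def using g1 t2 t3 g4 g5 by (intro conjI)
qed

lemma good_final:
  assumes sg: "simple_graph V E" and g: "good V E cv ce {}" and nz: "\<forall>e\<in>E. ce e \<noteq> 0"
  shows "total_colouring V E 9 cv ce"
proof -
  note gs = g[unfolded good_def]
  note t1 = conjunct1[OF gs] and t2 = conjunct1[OF conjunct2[OF gs]]
    and t3 = conjunct1[OF conjunct2[OF conjunct2[OF gs]]]
    and t4 = conjunct1[OF conjunct2[OF conjunct2[OF conjunct2[OF gs]]]]
    and t5 = conjunct2[OF conjunct2[OF conjunct2[OF conjunct2[OF gs]]]]
  have s1: "\<forall>v\<in>V. cv v \<in> {1..9}" using t2 by simp
  have s2: "\<forall>e\<in>E. ce e \<in> {1..9}" using t1 nz by (simp add: Suc_le_eq)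
  have s3: "\<forall>x\<in>V. \<forall>y\<in>V. x \<noteq> y \<and> {x, y} \<in> E \<longrightarrow> cv x \<noteq> cv y" using t3 by simp
  have s4: "\<forall>e\<in>E. \<forall>e'\<in>E. e \<noteq> e' \<and> e \<inter> e' \<noteq> {} \<longrightarrow> ce e \<noteq> ce e'"
  proof (intro ballI impI)
    fix e e' assume e: "e \<in> E" and e': "e' \<in> E" and h: "e \<noteq> e' \<and> e \<inter> e' \<noteq> {}"
    then obtain z where z: "z \<in> e" "z \<in> e'" by blast
    have "z \<in> V" using sg_edge[OF sg e] z by blast
    moreover have "e \<in> inc E z" "e' \<in> inc E z" using e e' z unfolding inc_iff by simp_all
    ultimately show "ce e \<noteq> ce e'" using t4 h nz e by blast
  qed
  have s5: "\<forall>e\<in>E. \<forall>v\<in>e. cv v \<noteq> ce e"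
  proof (intro ballI)
    fix e z assume e: "e \<in> E" and z: "z \<in> e"
    have "z \<in> V" using sg_edge[OF sg e] z by blast
    moreover have "e \<in> inc E z" using e z unfolding inc_iff by simp
    ultimately show "cv z \<noteq> ce e" using t5 by simp
  qed
  show ?thesis unfolding total_colouring_def using s1 s2 s3 s4 s5 by (intro conjI)
qed

lemma avoid: assumes "finite S" "card S < 9" shows "\<exists>c\<in>{1..9::nat}. c \<notin> S"
proof (rule ccontr)
  assume "\<not> ?thesis"
  then have "{1..9::nat} \<subseteq> S" by blast
  then have "card {1..9::nat} \<le> card S" using assms(1) by (rule card_mono[rotated])
  then show False using assms(2) by simp
qed

lemma good_ext:
  assumes sg: "simple_graph V E" and g: "good V E cv ce (insert z X)" and z: "z \<in> V" "z \<notin> X"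
    and dz: "degree V E z \<le> 4"
  shows "\<exists>c. good V E (cv(z := c)) ce X"
proof -
  note gs = g[unfolded good_def]
  note t1 = conjunct1[OF gs] and t2 = conjunct1[OF conjunct2[OF gs]]
    and t3 = conjunct1[OF conjunct2[OF conjunct2[OF gs]]]
    and t4 = conjunct1[OF conjunct2[OF conjunct2[OF conjunct2[OF gs]]]]
    and t5 = conjunct2[OF conjunct2[OF conjunct2[OF conjunct2[OF gs]]]]
  let ?N = "neighbours V E z"
  let ?S = "cv ` ?N \<union> ce ` inc E z"
  have fN: "finite ?N" using sg_fin[OF sg] unfolding neighbours_def by simp
  have "card ?S \<le> card (cv ` ?N) + card (ce ` inc E z)" by (rule card_Un_le)
  also have "\<dots> \<le> card ?N + card (inc E z)"
    using card_image_le[OF fN] card_image_le[OF fin_inc[OF sg]] by (rule add_mono)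
  also have "\<dots> \<le> 8" using card_inc[OF sg, of z] dz unfolding degree_def by simp
  finally have "card ?S < 9" by simp
  moreover have "finite ?S" using fN fin_inc[OF sg] by simp
  ultimately obtain c where c: "c \<in> {1..9}" "c \<notin> ?S" using avoid by blast
  let ?cv = "cv(z := c)"
  have g2: "\<forall>w\<in>V-X. ?cv w \<in> {1..9}" using t2 c by auto
  have g3: "\<forall>a\<in>V-X. \<forall>b\<in>V-X. a \<noteq> b \<and> {a,b} \<in> E \<longrightarrow> ?cv a \<noteq> ?cv b"
  proof (intro ballI impI)
    fix a b assume a: "a \<in> V - X" and b: "b \<in> V - X" and ab: "a \<noteq> b \<and> {a,b} \<in> E"
    show "?cv a \<noteq> ?cv b"
    proof (cases "a = z")
      case True
      then have "b \<in> ?N" using ab b unfolding nb_iff by (auto simp: insert_commute)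
      then have "cv b \<noteq> c" using c by blast
      moreover have "b \<noteq> z" using ab True by blast
      ultimately show ?thesis using True by simp
    next
      case False
      show ?thesis
      proof (cases "b = z")
        case True
        then have "a \<in> ?N" using ab a unfolding nb_iff by auto
        then have "cv a \<noteq> c" using c by blast
        then show ?thesis using True ab by simp
      next
        case F2: False
        then show ?thesis using False a b ab t3 by simp
      qed
    qed
  qed
  have g5: "\<forall>w\<in>V-X. \<forall>e\<in>inc E w. ?cv w \<noteq> ce e"
  proof (intro ballI)
    fix w e assume w: "w \<in> V - X" and e: "e \<in> inc E w"
    show "?cv w \<noteq> ce e"
    proof (cases "w = z")
      case True then show ?thesis using c e by auto
    next
      case False then show ?thesis using bspec[OF bspec[OF t5] e] w by simp
    qed
  qed
  have "good V E ?cv ce X" unfolding good_def using t1 g2 g3 t4 g5 by (intro conjI)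
  then show ?thesis by blast
qed

lemma good_uncol: assumes g: "good V E cv ce X" shows "good V E cv (ce(e := 0)) X"
proof -
  note gs = g[unfolded good_def]
  note t1 = conjunct1[OF gs] and t2 = conjunct1[OF conjunct2[OF gs]]
    and t3 = conjunct1[OF conjunct2[OF conjunct2[OF gs]]]
    and t4 = conjunct1[OF conjunct2[OF conjunct2[OF conjunct2[OF gs]]]]
    and t5 = conjunct2[OF conjunct2[OF conjunct2[OF conjunct2[OF gs]]]]
  let ?c = "ce(e := 0)"
  have g1: "\<forall>e\<in>E. ?c e \<le> 9" using t1 by auto
  have g4: "\<forall>z\<in>V. \<forall>e1\<in>inc E z. \<forall>e2\<in>inc E z. e1 \<noteq> e2 \<and> ?c e1 \<noteq> 0 \<longrightarrow> ?c e1 \<noteq> ?c e2"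
  proof (intro ballI impI)
    fix z e1 e2 assume z: "z \<in> V" and e1: "e1 \<in> inc E z" and e2: "e2 \<in> inc E z" and h: "e1 \<noteq> e2 \<and> ?c e1 \<noteq> 0"
    then have ne: "e1 \<noteq> e" by auto
    show "?c e1 \<noteq> ?c e2"
    proof (cases "e2 = e")
      case True then show ?thesis using h ne by simp
    next
      case False then show ?thesis using ne h bspec[OF bspec[OF bspec[OF t4 z] e1] e2] by simp
    qed
  qed
  have g5: "\<forall>z\<in>V-X. \<forall>e1\<in>inc E z. cv z \<noteq> ?c e1"
  proof (intro ballI)
    fix z e1 assume z: "z \<in> V - X" and e1: "e1 \<in> inc E z"
    show "cv z \<noteq> ?c e1"
    proof (cases "e1 = e")
      case True then show ?thesis using bspec[OF t2 z] by simp
    next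
      case False then show ?thesis using bspec[OF bspec[OF t5 z] e1] by simp
    qed
  qed
  show ?thesis unfolding good_def using g1 t2 t3 g4 g5 by (intro conjI)
qed

lemma col2: assumes g: "good V E cv ce X" and c: "c \<in> {1..9}"
  and p: "\<forall>e'\<in>inc E p. e' \<noteq> {p,q} \<longrightarrow> ce e' \<noteq> c" and q: "\<forall>e'\<in>inc E q. e' \<noteq> {p,q} \<longrightarrow> ce e' \<noteq> c"
  and pX: "p \<notin> X \<longrightarrow> cv p \<noteq> c" and qX: "q \<notin> X \<longrightarrow> cv q \<noteq> c"
  shows "good V E cv (ce({p,q} := c)) X"
  by (rule good_col[OF g c]) (use p q pX qX in blast)

lemma ne_edge: "z \<in> e \<Longrightarrow> z \<noteq> a \<Longrightarrow> z \<noteq> b \<Longrightarrow> e \<noteq> {a,b}" by auto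

locale cfg =
  fixes V :: "'a set" and E :: "'a set set" and v w x y u u' :: 'a and cv :: "'a \<Rightarrow> nat" and ce :: "'a set \<Rightarrow> nat"
  assumes sg: "simple_graph V E" and deg: "\<forall>z\<in>V. degree V E z \<le> 8"
    and Nw: "neighbours V E w = {v,x,y}" and vx: "v \<noteq> x" and vy: "v \<noteq> y" and xy: "x \<noteq> y"
    and Nu: "neighbours V E u = {v,u'}" and u'v: "u' \<noteq> v" and uw: "u \<noteq> w"
    and evx: "{v,x} \<in> E" and evy: "{v,y} \<in> E" and wV: "w \<in> V" and uV: "u \<in> V"
    and tc: "total_colouring V (E - {{u,v}}) 9 cv ce"
begin

abbreviation "ce0 \<equiv> ce({u,v} := 0)"
abbreviation "S' \<equiv> insert (cv u') (ce0 ` (inc E u' - {{u,u'}}))"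

lemma basic: "v \<in> V" "x \<in> V" "y \<in> V" "u' \<in> V" "w \<noteq> v" "w \<noteq> x" "w \<noteq> y" "u \<noteq> v" "u \<noteq> u'"
  "{v,w} \<in> E" "{w,x} \<in> E" "{w,y} \<in> E" "{u,v} \<in> E" "{u,u'} \<in> E"
proof -
  have "v \<in> neighbours V E w" "x \<in> neighbours V E w" "y \<in> neighbours V E w" using Nw by auto
  then show "v \<in> V" "x \<in> V" "y \<in> V" "w \<noteq> v" "w \<noteq> x" "w \<noteq> y" "{v,w} \<in> E" "{w,x} \<in> E" "{w,y} \<in> E"
    unfolding nb_iff by (auto simp: insert_commute)
  have "v \<in> neighbours V E u" "u' \<in> neighbours V E u" using Nu by auto
  then show "u' \<in> V" "u \<noteq> v" "u \<noteq> u'" "{u,v} \<in> E" "{u,u'} \<in> E"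
    unfolding nb_iff by (auto simp: insert_commute)
qed

lemma g0: "good V E cv ce0 {u,w}"
  by (rule good_init[OF sg basic(13) _ tc]) simp

lemma g0s: "\<forall>z\<in>V. \<forall>e\<in>inc E z. \<forall>e'\<in>inc E z. e \<noteq> e' \<and> ce0 e \<noteq> 0 \<longrightarrow> ce0 e \<noteq> ce0 e'"
  "\<forall>z\<in>V-{u,w}. \<forall>e\<in>inc E z. cv z \<noteq> ce0 e" "\<forall>z\<in>V-{u,w}. cv z \<in> {1..9}"
proof -
  note gs = g0[unfolded good_def]
  show "\<forall>z\<in>V. \<forall>e\<in>inc E z. \<forall>e'\<in>inc E z. e \<noteq> e' \<and> ce0 e \<noteq> 0 \<longrightarrow> ce0 e \<noteq> ce0 e'"
    using conjunct1[OF conjunct2[OF conjunct2[OF conjunct2[OF gs]]]] .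
  show "\<forall>z\<in>V-{u,w}. \<forall>e\<in>inc E z. cv z \<noteq> ce0 e"
    using conjunct2[OF conjunct2[OF conjunct2[OF conjunct2[OF gs]]]] .
  show "\<forall>z\<in>V-{u,w}. cv z \<in> {1..9}" using conjunct1[OF conjunct2[OF gs]] .
qed

lemma nz: assumes "e \<in> E" "e \<noteq> {u,v}" shows "ce0 e \<in> {1..9}"
proof -
  note t2 = conjunct1[OF conjunct2[OF tc[unfolded total_colouring_def]]]
  have "e \<in> E - {{u,v}}" using assms by simp
  then show ?thesis using bspec[OF t2] assms(2) by simp
qed

lemma inj0: assumes "z \<in> V" "e \<in> E" "e' \<in> E" "z \<in> e" "z \<in> e'" "e \<noteq> e'" "e \<noteq> {u,v}"
  shows "ce0 e \<noteq> ce0 e'"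
proof -
  have "e \<in> inc E z" "e' \<in> inc E z" using assms unfolding inc_iff by simp_all
  moreover have "ce0 e \<noteq> 0" using nz[OF assms(2,7)] by simp
  ultimately show ?thesis using bspec[OF bspec[OF bspec[OF g0s(1) assms(1)]]] assms(6) by blast
qed

lemma ve0: assumes "z \<in> V" "z \<noteq> u" "z \<noteq> w" "e \<in> E" "z \<in> e" shows "cv z \<noteq> ce0 e"
proof -
  have "z \<in> V - {u,w}" using assms by simp
  moreover have "e \<in> inc E z" using assms unfolding inc_iff by simp
  ultimately show ?thesis using g0s(2) by blast
qed

lemma cv_range: "z \<in> V \<Longrightarrow> z \<noteq> u \<Longrightarrow> z \<noteq> w \<Longrightarrow> cv z \<in> {1..9}"
  using g0s(3) by simp

lemma inc_w: "inc E w = {{v,w},{w,x},{w,y}}"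
proof
  have "(\<lambda>z. {w,z}) ` neighbours V E w = {{w,v},{w,x},{w,y}}" unfolding Nw by simp
  then show "inc E w \<subseteq> {{v,w},{w,x},{w,y}}" using inc_sub_nb[OF sg, of w] by (simp add: insert_commute)
  show "{{v,w},{w,x},{w,y}} \<subseteq> inc E w" using basic by (simp add: inc_iff)
qed

lemma inc_u: "inc E u = {{u,v},{u,u'}}"
proof
  have "(\<lambda>z. {u,z}) ` neighbours V E u = {{u,v},{u,u'}}" unfolding Nu by simp
  then show "inc E u \<subseteq> {{u,v},{u,u'}}" using inc_sub_nb[OF sg, of u] by simp
  show "{{u,v},{u,u'}} \<subseteq> inc E u" using basic by (simp add: inc_iff)
qed

lemma finish: assumes g: "good V E cv c' {u,w}" and nzz: "\<forall>e\<in>E. c' e \<noteq> 0"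
  shows "total_colourable V E 9"
proof -
  have dw: "degree V E w \<le> 4" unfolding degree_def Nw using vx vy xy by simp
  have du: "degree V E u \<le> 4" unfolding degree_def Nu using u'v by simp
  have "good V E cv c' (insert w {u})" using g by (simp add: insert_commute)
  then obtain c1 where "good V E (cv(w := c1)) c' {u}" using good_ext[OF sg _ wV _ dw] uw by blast
  then have "good V E (cv(w := c1)) c' (insert u {})" by simp
  then obtain c2 where "good V E (cv(w := c1, u := c2)) c' {}" using good_ext[OF sg _ uV _ du] by blast
  then have "total_colouring V E 9 (cv(w := c1, u := c2)) c'" using good_final[OF sg _ nzz] by blast
  then show ?thesis unfolding total_colourable_def by blast
qed

end

context cfg begin

lemma case2b:
  assumes a1: "\<alpha> \<in> {1..9}" and av: "\<forall>e\<in>inc E v. ce0 e \<noteq> \<alpha>" and acv: "cv v \<noteq> \<alpha>"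
    and aS: "\<alpha> \<notin> S'" and u'w: "u' \<noteq> w" and ux: "u \<noteq> x" and uy: "u \<noteq> y"
    and wxa: "ce0 {w,x} = \<alpha>" and eq: "ce0 {v,x} \<noteq> ce0 {w,y}"
  shows "total_colourable V E 9"
proof -
  note B = basic
  have u'x: "u' \<noteq> x"
  proof
    assume "u' = x"
    then have "{w,x} \<in> inc E u' - {{u,u'}}" using B uw by (auto simp: inc_iff doubleton_eq_iff)
    then show False using aS wxa by blast
  qed
  define \<epsilon> where "\<epsilon> = ce0 {v,x}"
  define \<beta> where "\<beta> = ce0 {v,w}"
  define q where "q = ce0 {w,y}"
  have D: "v \<noteq> x" "v \<noteq> y" "x \<noteq> y" "w \<noteq> v" "w \<noteq> x" "w \<noteq> y" "u \<noteq> v" "u \<noteq> u'" "u \<noteq> w"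
    "u \<noteq> x" "u \<noteq> y" "u' \<noteq> v" "u' \<noteq> w" "u' \<noteq> x" using vx vy xy B uw ux uy u'v u'w u'x by auto
  have r\<epsilon>: "\<epsilon> \<in> {1..9}" unfolding \<epsilon>_def using nz[OF evx] D by (auto simp: doubleton_eq_iff)
  have r\<beta>: "\<beta> \<in> {1..9}" unfolding \<beta>_def using nz[OF B(10)] D by (auto simp: doubleton_eq_iff)
  have vxi: "{v,x} \<in> inc E v" "{v,w} \<in> inc E v" using evx B by (simp_all add: inc_iff)
  have a\<epsilon>: "\<alpha> \<noteq> \<epsilon>" using av vxi unfolding \<epsilon>_def by metis
  have a\<beta>: "\<alpha> \<noteq> \<beta>" using av vxi unfolding \<beta>_def by metis
  have \<beta>\<epsilon>: "\<beta> \<noteq> \<epsilon>" unfolding \<beta>_def \<epsilon>_def using inj0[OF B(1) B(10) evx] D by (auto simp: doubleton_eq_iff)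
  have q\<epsilon>: "q \<noteq> \<epsilon>" using eq unfolding q_def \<epsilon>_def by simp
  have cxa: "cv x \<noteq> \<alpha>" using ve0[OF B(2)] D B wxa by fastforce
  have cxe: "cv x \<noteq> \<epsilon>" unfolding \<epsilon>_def using ve0[OF B(2) _ _ evx] D by simp
  have cve: "cv v \<noteq> \<epsilon>" unfolding \<epsilon>_def using ve0[OF B(1) _ _ evx] D by simp
  have au': "cv u' \<noteq> \<alpha>" "\<And>e. e \<in> inc E u' \<Longrightarrow> e \<noteq> {u,u'} \<Longrightarrow> ce0 e \<noteq> \<alpha>" using aS by auto
  define c1 where "c1 = ce0({w,x} := 0)"
  define c2 where "c2 = c1({v,x} := \<alpha>)"
  define c3 where "c3 = c2({w,x} := \<epsilon>)"
  define c4 where "c4 = c3({u,u'} := \<alpha>)"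
  define c5 where "c5 = c4({u,v} := \<epsilon>)"
  have g1: "good V E cv c1 {u,w}" unfolding c1_def by (rule good_uncol[OF g0])
  have g2: "good V E cv c2 {u,w}" unfolding c2_def
  proof (rule col2[OF g1 a1])
    show "\<forall>e'\<in>inc E v. e' \<noteq> {v,x} \<longrightarrow> c1 e' \<noteq> \<alpha>"
    proof (intro ballI impI)
      fix e' assume e': "e' \<in> inc E v" "e' \<noteq> {v,x}"
      have "e' \<noteq> {w,x}" using e' D by (auto simp: inc_iff)
      then show "c1 e' \<noteq> \<alpha>" using av e' unfolding c1_def by simp
    qed
    show "\<forall>e'\<in>inc E x. e' \<noteq> {v,x} \<longrightarrow> c1 e' \<noteq> \<alpha>"
    proof (intro ballI impI)
      fix e' assume e': "e' \<in> inc E x" "e' \<noteq> {v,x}"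
      show "c1 e' \<noteq> \<alpha>"
      proof (cases "e' = {w,x}")
        case True then show ?thesis using a1 unfolding c1_def by simp
      next
        case False
        have e'E: "e' \<in> E" and e'z: "x \<in> e'" using e' by (simp_all add: inc_iff)
        have "ce0 {w,x} \<noteq> ce0 e'" using inj0[OF B(2) B(11) e'E _ e'z] False D by (simp add: doubleton_eq_iff)
        then show ?thesis using False wxa unfolding c1_def by simp
      qed
    qed
    show "v \<notin> {u,w} \<longrightarrow> cv v \<noteq> \<alpha>" using acv by simp
    show "x \<notin> {u,w} \<longrightarrow> cv x \<noteq> \<alpha>" using cxa by simp
  qed
  have g3: "good V E cv c3 {u,w}" unfolding c3_def
  proof (rule col2[OF g2 r\<epsilon>])
    show "\<forall>e'\<in>inc E w. e' \<noteq> {w,x} \<longrightarrow> c2 e' \<noteq> \<epsilon>"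
    proof (intro ballI impI)
      fix e' assume e': "e' \<in> inc E w" "e' \<noteq> {w,x}"
      then have "e' = {v,w} \<or> e' = {w,y}" using inc_w by auto
      then show "c2 e' \<noteq> \<epsilon>"
      proof
        assume "e' = {v,w}"
        then show ?thesis using \<beta>\<epsilon> D unfolding c2_def c1_def \<beta>_def by (simp add: doubleton_eq_iff)
      next
        assume "e' = {w,y}"
        then show ?thesis using q\<epsilon> D unfolding c2_def c1_def q_def by (simp add: doubleton_eq_iff)
      qed
    qed
    show "\<forall>e'\<in>inc E x. e' \<noteq> {w,x} \<longrightarrow> c2 e' \<noteq> \<epsilon>"
    proof (intro ballI impI)
      fix e' assume e': "e' \<in> inc E x" "e' \<noteq> {w,x}"
      show "c2 e' \<noteq> \<epsilon>"
      proof (cases "e' = {v,x}")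
        case True then show ?thesis using a\<epsilon> unfolding c2_def by simp
      next
        case False
        have e'E: "e' \<in> E" and e'z: "x \<in> e'" using e' by (simp_all add: inc_iff)
        have "ce0 {v,x} \<noteq> ce0 e'" using inj0[OF B(2) evx e'E _ e'z] False D by (simp add: doubleton_eq_iff)
        then show ?thesis using False e' unfolding c2_def c1_def \<epsilon>_def by simp
      qed
    qed
    show "w \<notin> {u,w} \<longrightarrow> cv w \<noteq> \<epsilon>" by simp
    show "x \<notin> {u,w} \<longrightarrow> cv x \<noteq> \<epsilon>" using cxe by simp
  qed
  have g4: "good V E cv c4 {u,w}" unfolding c4_def
  proof (rule col2[OF g3 a1])
    show "\<forall>e'\<in>inc E u. e' \<noteq> {u,u'} \<longrightarrow> c3 e' \<noteq> \<alpha>"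
    proof (intro ballI impI)
      fix e' assume e': "e' \<in> inc E u" "e' \<noteq> {u,u'}"
      then have "e' = {u,v}" using inc_u by auto
      then show "c3 e' \<noteq> \<alpha>" using a1 D unfolding c3_def c2_def c1_def by (simp add: doubleton_eq_iff)
    qed
    show "\<forall>e'\<in>inc E u'. e' \<noteq> {u,u'} \<longrightarrow> c3 e' \<noteq> \<alpha>"
    proof (intro ballI impI)
      fix e' assume e': "e' \<in> inc E u'" "e' \<noteq> {u,u'}"
      have "e' \<noteq> {w,x}" "e' \<noteq> {v,x}" using e' D by (auto simp: inc_iff)
      then show "c3 e' \<noteq> \<alpha>" using au'(2)[OF e'] unfolding c3_def c2_def c1_def by simp
    qed
    show "u \<notin> {u,w} \<longrightarrow> cv u \<noteq> \<alpha>" by simp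
    show "u' \<notin> {u,w} \<longrightarrow> cv u' \<noteq> \<alpha>" using au' by simp
  qed
  have g5: "good V E cv c5 {u,w}" unfolding c5_def
  proof (rule col2[OF g4 r\<epsilon>])
    show "\<forall>e'\<in>inc E u. e' \<noteq> {u,v} \<longrightarrow> c4 e' \<noteq> \<epsilon>"
    proof (intro ballI impI)
      fix e' assume e': "e' \<in> inc E u" "e' \<noteq> {u,v}"
      then have "e' = {u,u'}" using inc_u by auto
      then show "c4 e' \<noteq> \<epsilon>" using a\<epsilon> unfolding c4_def by simp
    qed
    show "\<forall>e'\<in>inc E v. e' \<noteq> {u,v} \<longrightarrow> c4 e' \<noteq> \<epsilon>"
    proof (intro ballI impI)
      fix e' assume e': "e' \<in> inc E v" "e' \<noteq> {u,v}"
      have n: "e' \<noteq> {u,u'}" "e' \<noteq> {w,x}" using e' D by (auto simp: inc_iff)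
      show "c4 e' \<noteq> \<epsilon>"
      proof (cases "e' = {v,x}")
        case True then show ?thesis using a\<epsilon> D unfolding c4_def c3_def c2_def by (simp add: doubleton_eq_iff)
      next
        case False
        have e'E: "e' \<in> E" and e'z: "v \<in> e'" using e' by (simp_all add: inc_iff)
        have "ce0 {v,x} \<noteq> ce0 e'" using inj0[OF B(1) evx e'E _ e'z] False D by (simp add: doubleton_eq_iff)
        then show ?thesis using False n unfolding c4_def c3_def c2_def c1_def \<epsilon>_def by simp
      qed
    qed
    show "u \<notin> {u,w} \<longrightarrow> cv u \<noteq> \<epsilon>" by simp
    show "v \<notin> {u,w} \<longrightarrow> cv v \<noteq> \<epsilon>" using cve by simp
  qed
  have nz5: "\<forall>e\<in>E. c5 e \<noteq> 0"
  proof
    fix e assume e: "e \<in> E"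
    show "c5 e \<noteq> 0"
    proof (cases "e \<in> {{u,v},{u,u'},{w,x},{v,x}}")
      case True then show ?thesis using a1 r\<epsilon> unfolding c5_def c4_def c3_def c2_def c1_def by auto
    next
      case False then show ?thesis using nz[OF e] unfolding c5_def c4_def c3_def c2_def c1_def by simp
    qed
  qed
  show ?thesis by (rule finish[OF g5 nz5])
qed


lemma case2c:
  assumes a1: "\<alpha> \<in> {1..9}" and av: "\<forall>e\<in>inc E v. ce0 e \<noteq> \<alpha>" and acv: "cv v \<noteq> \<alpha>"
    and aS: "\<alpha> \<notin> S'" and u'w: "u' \<noteq> w" and ux: "u \<noteq> x" and uy: "u \<noteq> y"
    and wxa: "ce0 {w,x} = \<alpha>" and eq: "ce0 {v,x} = ce0 {w,y}"
  shows "total_colourable V E 9"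
proof -
  note B = basic
  have u'x: "u' \<noteq> x"
  proof
    assume "u' = x"
    then have "{w,x} \<in> inc E u' - {{u,u'}}" using B uw by (auto simp: inc_iff doubleton_eq_iff)
    then show False using aS wxa by blast
  qed
  define \<epsilon> where "\<epsilon> = ce0 {v,x}"
  define \<beta> where "\<beta> = ce0 {v,w}"
  define \<zeta> where "\<zeta> = ce0 {v,y}"
  have D: "v \<noteq> x" "v \<noteq> y" "x \<noteq> y" "w \<noteq> v" "w \<noteq> x" "w \<noteq> y" "u \<noteq> v" "u \<noteq> u'" "u \<noteq> w"
    "u \<noteq> x" "u \<noteq> y" "u' \<noteq> v" "u' \<noteq> w" "u' \<noteq> x" using vx vy xy B uw ux uy u'v u'w u'x by auto
  have r\<epsilon>: "\<epsilon> \<in> {1..9}" unfolding \<epsilon>_def using nz[OF evx] D by (auto simp: doubleton_eq_iff)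
  have r\<zeta>: "\<zeta> \<in> {1..9}" unfolding \<zeta>_def using nz[OF evy] D by (auto simp: doubleton_eq_iff)
  have vxi: "{v,x} \<in> inc E v" "{v,w} \<in> inc E v" "{v,y} \<in> inc E v" using evx evy B by (simp_all add: inc_iff)
  have a\<epsilon>: "\<alpha> \<noteq> \<epsilon>" using av vxi unfolding \<epsilon>_def by metis
  have a\<zeta>: "\<alpha> \<noteq> \<zeta>" using av vxi unfolding \<zeta>_def by metis
  have \<beta>\<epsilon>: "\<beta> \<noteq> \<epsilon>" unfolding \<beta>_def \<epsilon>_def using inj0[OF B(1) B(10) evx] D by (auto simp: doubleton_eq_iff)
  have \<beta>\<zeta>: "\<beta> \<noteq> \<zeta>" unfolding \<beta>_def \<zeta>_def using inj0[OF B(1) B(10) evy] D by (auto simp: doubleton_eq_iff)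
  have \<epsilon>\<zeta>: "\<epsilon> \<noteq> \<zeta>" unfolding \<epsilon>_def \<zeta>_def using inj0[OF B(1) evx evy] D by (auto simp: doubleton_eq_iff)
  have cxa: "cv x \<noteq> \<alpha>" using ve0[OF B(2)] D B wxa by fastforce
  have cxe: "cv x \<noteq> \<epsilon>" unfolding \<epsilon>_def using ve0[OF B(2) _ _ evx] D by simp
  have cve: "cv v \<noteq> \<epsilon>" unfolding \<epsilon>_def using ve0[OF B(1) _ _ evx] D by simp
  have cvz: "cv v \<noteq> \<zeta>" unfolding \<zeta>_def using ve0[OF B(1) _ _ evy] D by simp
  have cye: "cv y \<noteq> \<epsilon>" unfolding \<epsilon>_def eq using ve0[OF B(3) _ _ B(12)] D by simp
  have cyz: "cv y \<noteq> \<zeta>" unfolding \<zeta>_def using ve0[OF B(3) _ _ evy] D by simp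
  have au': "cv u' \<noteq> \<alpha>" "\<And>e. e \<in> inc E u' \<Longrightarrow> e \<noteq> {u,u'} \<Longrightarrow> ce0 e \<noteq> \<alpha>" using aS by auto
  define c1 where "c1 = ce0({w,x} := 0, {w,y} := 0)"
  define c2 where "c2 = c1({v,x} := \<alpha>)"
  define c3 where "c3 = c2({v,y} := \<epsilon>)"
  define c4 where "c4 = c3({w,x} := \<epsilon>)"
  define c5 where "c5 = c4({w,y} := \<zeta>)"
  define c6 where "c6 = c5({u,u'} := \<alpha>)"
  define c7 where "c7 = c6({u,v} := \<zeta>)"
  note cd = c7_def c6_def c5_def c4_def c3_def c2_def c1_def
  have g1: "good V E cv c1 {u,w}" unfolding c1_def by (rule good_uncol[OF good_uncol[OF g0]])
  have g2: "good V E cv c2 {u,w}" unfolding c2_def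
  proof (rule col2[OF g1 a1])
    show "\<forall>e'\<in>inc E v. e' \<noteq> {v,x} \<longrightarrow> c1 e' \<noteq> \<alpha>"
    proof (intro ballI impI)
      fix e' assume e': "e' \<in> inc E v" "e' \<noteq> {v,x}"
      have "e' \<noteq> {w,x}" "e' \<noteq> {w,y}" using e' D by (auto simp: inc_iff)
      then show "c1 e' \<noteq> \<alpha>" using av e' unfolding c1_def by simp
    qed
    show "\<forall>e'\<in>inc E x. e' \<noteq> {v,x} \<longrightarrow> c1 e' \<noteq> \<alpha>"
    proof (intro ballI impI)
      fix e' assume e': "e' \<in> inc E x" "e' \<noteq> {v,x}"
      have n: "e' \<noteq> {w,y}" using e' D by (auto simp: inc_iff)
      show "c1 e' \<noteq> \<alpha>"
      proof (cases "e' = {w,x}")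
        case True then show ?thesis using a1 unfolding c1_def by simp
      next
        case False
        have e'E: "e' \<in> E" and e'z: "x \<in> e'" using e' by (simp_all add: inc_iff)
        have "ce0 {w,x} \<noteq> ce0 e'" using inj0[OF B(2) B(11) e'E _ e'z] False D by (simp add: doubleton_eq_iff)
        then show ?thesis using False n wxa unfolding c1_def by simp
      qed
    qed
    show "v \<notin> {u,w} \<longrightarrow> cv v \<noteq> \<alpha>" using acv by simp
    show "x \<notin> {u,w} \<longrightarrow> cv x \<noteq> \<alpha>" using cxa by simp
  qed
  have g3: "good V E cv c3 {u,w}" unfolding c3_def
  proof (rule col2[OF g2 r\<epsilon>])
    show "\<forall>e'\<in>inc E v. e' \<noteq> {v,y} \<longrightarrow> c2 e' \<noteq> \<epsilon>"
    proof (intro ballI impI)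
      fix e' assume e': "e' \<in> inc E v" "e' \<noteq> {v,y}"
      have n: "e' \<noteq> {w,x}" "e' \<noteq> {w,y}" using e' D by (auto simp: inc_iff)
      show "c2 e' \<noteq> \<epsilon>"
      proof (cases "e' = {v,x}")
        case True then show ?thesis using a\<epsilon> unfolding c2_def by simp
      next
        case False
        have e'E: "e' \<in> E" and e'z: "v \<in> e'" using e' by (simp_all add: inc_iff)
        have "ce0 {v,x} \<noteq> ce0 e'" using inj0[OF B(1) evx e'E _ e'z] False D by (simp add: doubleton_eq_iff)
        then show ?thesis using False n unfolding c2_def c1_def \<epsilon>_def by simp
      qed
    qed
    show "\<forall>e'\<in>inc E y. e' \<noteq> {v,y} \<longrightarrow> c2 e' \<noteq> \<epsilon>"
    proof (intro ballI impI)
      fix e' assume e': "e' \<in> inc E y" "e' \<noteq> {v,y}"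
      have n: "e' \<noteq> {w,x}" "e' \<noteq> {v,x}" using e' D by (auto simp: inc_iff)
      show "c2 e' \<noteq> \<epsilon>"
      proof (cases "e' = {w,y}")
        case True then show ?thesis using r\<epsilon> D unfolding c2_def c1_def by (simp add: doubleton_eq_iff)
      next
        case False
        have e'E: "e' \<in> E" and e'z: "y \<in> e'" using e' by (simp_all add: inc_iff)
        have "ce0 {w,y} \<noteq> ce0 e'" using inj0[OF B(3) B(12) e'E _ e'z] False D by (simp add: doubleton_eq_iff)
        then show ?thesis using False n eq unfolding c2_def c1_def \<epsilon>_def by simp
      qed
    qed
    show "v \<notin> {u,w} \<longrightarrow> cv v \<noteq> \<epsilon>" using cve by simp
    show "y \<notin> {u,w} \<longrightarrow> cv y \<noteq> \<epsilon>" using cye by simp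
  qed
  have g4: "good V E cv c4 {u,w}" unfolding c4_def
  proof (rule col2[OF g3 r\<epsilon>])
    show "\<forall>e'\<in>inc E w. e' \<noteq> {w,x} \<longrightarrow> c3 e' \<noteq> \<epsilon>"
    proof (intro ballI impI)
      fix e' assume e': "e' \<in> inc E w" "e' \<noteq> {w,x}"
      then have "e' = {v,w} \<or> e' = {w,y}" using inc_w by auto
      then show "c3 e' \<noteq> \<epsilon>"
      proof
        assume "e' = {v,w}"
        then show ?thesis using \<beta>\<epsilon> D unfolding c3_def c2_def c1_def \<beta>_def by (simp add: doubleton_eq_iff)
      next
        assume "e' = {w,y}"
        then show ?thesis using r\<epsilon> D unfolding c3_def c2_def c1_def by (simp add: doubleton_eq_iff)
      qed
    qed
    show "\<forall>e'\<in>inc E x. e' \<noteq> {w,x} \<longrightarrow> c3 e' \<noteq> \<epsilon>"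
    proof (intro ballI impI)
      fix e' assume e': "e' \<in> inc E x" "e' \<noteq> {w,x}"
      have n: "e' \<noteq> {v,y}" "e' \<noteq> {w,y}" using e' D by (auto simp: inc_iff)
      show "c3 e' \<noteq> \<epsilon>"
      proof (cases "e' = {v,x}")
        case True then show ?thesis using a\<epsilon> D unfolding c3_def c2_def by (simp add: doubleton_eq_iff)
      next
        case False
        have e'E: "e' \<in> E" and e'z: "x \<in> e'" using e' by (simp_all add: inc_iff)
        have "ce0 {v,x} \<noteq> ce0 e'" using inj0[OF B(2) evx e'E _ e'z] False D by (simp add: doubleton_eq_iff)
        then show ?thesis using False n e' unfolding c3_def c2_def c1_def \<epsilon>_def by simp
      qed
    qed
    show "w \<notin> {u,w} \<longrightarrow> cv w \<noteq> \<epsilon>" by simp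
    show "x \<notin> {u,w} \<longrightarrow> cv x \<noteq> \<epsilon>" using cxe by simp
  qed
  have g5: "good V E cv c5 {u,w}" unfolding c5_def
  proof (rule col2[OF g4 r\<zeta>])
    show "\<forall>e'\<in>inc E w. e' \<noteq> {w,y} \<longrightarrow> c4 e' \<noteq> \<zeta>"
    proof (intro ballI impI)
      fix e' assume e': "e' \<in> inc E w" "e' \<noteq> {w,y}"
      then have "e' = {v,w} \<or> e' = {w,x}" using inc_w by auto
      then show "c4 e' \<noteq> \<zeta>"
      proof
        assume "e' = {v,w}"
        then show ?thesis using \<beta>\<zeta> D unfolding c4_def c3_def c2_def c1_def \<beta>_def by (simp add: doubleton_eq_iff)
      next
        assume "e' = {w,x}"
        then show ?thesis using \<epsilon>\<zeta> D unfolding c4_def by (simp add: doubleton_eq_iff)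
      qed
    qed
    show "\<forall>e'\<in>inc E y. e' \<noteq> {w,y} \<longrightarrow> c4 e' \<noteq> \<zeta>"
    proof (intro ballI impI)
      fix e' assume e': "e' \<in> inc E y" "e' \<noteq> {w,y}"
      have n: "e' \<noteq> {w,x}" "e' \<noteq> {v,x}" using e' D by (auto simp: inc_iff)
      show "c4 e' \<noteq> \<zeta>"
      proof (cases "e' = {v,y}")
        case True then show ?thesis using \<epsilon>\<zeta> D unfolding c4_def c3_def by (simp add: doubleton_eq_iff)
      next
        case False
        have e'E: "e' \<in> E" and e'z: "y \<in> e'" using e' by (simp_all add: inc_iff)
        have "ce0 {v,y} \<noteq> ce0 e'" using inj0[OF B(3) evy e'E _ e'z] False D by (simp add: doubleton_eq_iff)
        then show ?thesis using False n e' unfolding c4_def c3_def c2_def c1_def \<zeta>_def by simp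
      qed
    qed
    show "w \<notin> {u,w} \<longrightarrow> cv w \<noteq> \<zeta>" by simp
    show "y \<notin> {u,w} \<longrightarrow> cv y \<noteq> \<zeta>" using cyz by simp
  qed
  have g6: "good V E cv c6 {u,w}" unfolding c6_def
  proof (rule col2[OF g5 a1])
    show "\<forall>e'\<in>inc E u. e' \<noteq> {u,u'} \<longrightarrow> c5 e' \<noteq> \<alpha>"
    proof (intro ballI impI)
      fix e' assume e': "e' \<in> inc E u" "e' \<noteq> {u,u'}"
      then have "e' = {u,v}" using inc_u by auto
      then show "c5 e' \<noteq> \<alpha>" using a1 D unfolding c5_def c4_def c3_def c2_def c1_def by (simp add: doubleton_eq_iff)
    qed
    show "\<forall>e'\<in>inc E u'. e' \<noteq> {u,u'} \<longrightarrow> c5 e' \<noteq> \<alpha>"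
    proof (intro ballI impI)
      fix e' assume e': "e' \<in> inc E u'" "e' \<noteq> {u,u'}"
      have n: "e' \<noteq> {w,x}" "e' \<noteq> {v,x}" using e' D by (auto simp: inc_iff)
      show "c5 e' \<noteq> \<alpha>"
      proof (cases "e' = {w,y}")
        case True then show ?thesis using a\<zeta> unfolding c5_def by simp
      next
        case F1: False
        show ?thesis
        proof (cases "e' = {v,y}")
          case True then show ?thesis using a\<epsilon> F1 D unfolding c5_def c4_def c3_def by (simp add: doubleton_eq_iff)
        next
          case False then show ?thesis using au'(2)[OF e'] F1 n unfolding c5_def c4_def c3_def c2_def c1_def by simp
        qed
      qed
    qed
    show "u \<notin> {u,w} \<longrightarrow> cv u \<noteq> \<alpha>" by simp
    show "u' \<notin> {u,w} \<longrightarrow> cv u' \<noteq> \<alpha>" using au' by simp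
  qed
  have g7: "good V E cv c7 {u,w}" unfolding c7_def
  proof (rule col2[OF g6 r\<zeta>])
    show "\<forall>e'\<in>inc E u. e' \<noteq> {u,v} \<longrightarrow> c6 e' \<noteq> \<zeta>"
    proof (intro ballI impI)
      fix e' assume e': "e' \<in> inc E u" "e' \<noteq> {u,v}"
      then have "e' = {u,u'}" using inc_u by auto
      then show "c6 e' \<noteq> \<zeta>" using a\<zeta> unfolding c6_def by simp
    qed
    show "\<forall>e'\<in>inc E v. e' \<noteq> {u,v} \<longrightarrow> c6 e' \<noteq> \<zeta>"
    proof (intro ballI impI)
      fix e' assume e': "e' \<in> inc E v" "e' \<noteq> {u,v}"
      have n: "e' \<noteq> {u,u'}" "e' \<noteq> {w,x}" "e' \<noteq> {w,y}" using e' D by (auto simp: inc_iff)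
      show "c6 e' \<noteq> \<zeta>"
      proof (cases "e' = {v,x}")
        case True then show ?thesis using a\<zeta> D unfolding c6_def c5_def c4_def c3_def c2_def by (simp add: doubleton_eq_iff)
      next
        case F1: False
        show ?thesis
        proof (cases "e' = {v,y}")
          case True then show ?thesis using \<epsilon>\<zeta> D unfolding c6_def c5_def c4_def c3_def by (simp add: doubleton_eq_iff)
        next
          case False
          have e'E: "e' \<in> E" and e'z: "v \<in> e'" using e' by (simp_all add: inc_iff)
          have "ce0 {v,y} \<noteq> ce0 e'" using inj0[OF B(1) evy e'E _ e'z] False D by (simp add: doubleton_eq_iff)
          then show ?thesis using False F1 n unfolding c6_def c5_def c4_def c3_def c2_def c1_def \<zeta>_def by simp
        qed
      qed
    qed
    show "u \<notin> {u,w} \<longrightarrow> cv u \<noteq> \<zeta>" by simp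
    show "v \<notin> {u,w} \<longrightarrow> cv v \<noteq> \<zeta>" using cvz by simp
  qed
  have nz7: "\<forall>e\<in>E. c7 e \<noteq> 0"
  proof
    fix e assume e: "e \<in> E"
    show "c7 e \<noteq> 0"
    proof (cases "e \<in> {{u,v},{u,u'},{w,x},{w,y},{v,x},{v,y}}")
      case True then show ?thesis using a1 r\<epsilon> r\<zeta> unfolding cd by auto
    next
      case False then show ?thesis using nz[OF e] unfolding cd by simp
    qed
  qed
  show ?thesis by (rule finish[OF g7 nz7])
qed

lemma case2a:
  assumes a1: "\<alpha> \<in> {1..9}" and av: "\<forall>e\<in>inc E v. ce0 e \<noteq> \<alpha>" and acv: "cv v \<noteq> \<alpha>"
    and aS: "\<alpha> \<notin> S'" and u'w: "u' \<noteq> w"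
    and wxa: "ce0 {w,x} \<noteq> \<alpha>" and wya: "ce0 {w,y} \<noteq> \<alpha>"
  shows "total_colourable V E 9"
proof -
  note B = basic
  define \<beta> where "\<beta> = ce0 {v,w}"
  have D: "w \<noteq> v" "u \<noteq> v" "u \<noteq> u'" "u \<noteq> w" "u' \<noteq> v" "u' \<noteq> w" using B uw u'v u'w by auto
  have r\<beta>: "\<beta> \<in> {1..9}" unfolding \<beta>_def using nz[OF B(10)] D by (auto simp: doubleton_eq_iff)
  have vwi: "{v,w} \<in> inc E v" using B by (simp add: inc_iff)
  have a\<beta>: "\<alpha> \<noteq> \<beta>" using av vwi unfolding \<beta>_def by metis
  have cvb: "cv v \<noteq> \<beta>" unfolding \<beta>_def using ve0[OF B(1) _ _ B(10)] D by simp
  have au': "cv u' \<noteq> \<alpha>" "\<And>e. e \<in> inc E u' \<Longrightarrow> e \<noteq> {u,u'} \<Longrightarrow> ce0 e \<noteq> \<alpha>" using aS by auto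
  define c1 where "c1 = ce0({v,w} := \<alpha>)"
  define c2 where "c2 = c1({u,u'} := \<alpha>)"
  define c3 where "c3 = c2({u,v} := \<beta>)"
  note cd = c3_def c2_def c1_def
  have g1: "good V E cv c1 {u,w}" unfolding c1_def
  proof (rule col2[OF g0 a1])
    show "\<forall>e'\<in>inc E v. e' \<noteq> {v,w} \<longrightarrow> ce0 e' \<noteq> \<alpha>" using av by blast
    show "\<forall>e'\<in>inc E w. e' \<noteq> {v,w} \<longrightarrow> ce0 e' \<noteq> \<alpha>" using inc_w wxa wya by auto
    show "v \<notin> {u,w} \<longrightarrow> cv v \<noteq> \<alpha>" using acv by simp
    show "w \<notin> {u,w} \<longrightarrow> cv w \<noteq> \<alpha>" by simp
  qed
  have g2: "good V E cv c2 {u,w}" unfolding c2_def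
  proof (rule col2[OF g1 a1])
    show "\<forall>e'\<in>inc E u. e' \<noteq> {u,u'} \<longrightarrow> c1 e' \<noteq> \<alpha>"
    proof (intro ballI impI)
      fix e' assume e': "e' \<in> inc E u" "e' \<noteq> {u,u'}"
      then have "e' = {u,v}" using inc_u by auto
      then show "c1 e' \<noteq> \<alpha>" using a1 D unfolding c1_def by (simp add: doubleton_eq_iff)
    qed
    show "\<forall>e'\<in>inc E u'. e' \<noteq> {u,u'} \<longrightarrow> c1 e' \<noteq> \<alpha>"
    proof (intro ballI impI)
      fix e' assume e': "e' \<in> inc E u'" "e' \<noteq> {u,u'}"
      have "e' \<noteq> {v,w}" using e' D by (auto simp: inc_iff)
      then show "c1 e' \<noteq> \<alpha>" using au'(2)[OF e'] unfolding c1_def by simp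
    qed
    show "u \<notin> {u,w} \<longrightarrow> cv u \<noteq> \<alpha>" by simp
    show "u' \<notin> {u,w} \<longrightarrow> cv u' \<noteq> \<alpha>" using au' by simp
  qed
  have g3: "good V E cv c3 {u,w}" unfolding c3_def
  proof (rule col2[OF g2 r\<beta>])
    show "\<forall>e'\<in>inc E u. e' \<noteq> {u,v} \<longrightarrow> c2 e' \<noteq> \<beta>"
    proof (intro ballI impI)
      fix e' assume e': "e' \<in> inc E u" "e' \<noteq> {u,v}"
      then have "e' = {u,u'}" using inc_u by auto
      then show "c2 e' \<noteq> \<beta>" using a\<beta> unfolding c2_def by simp
    qed
    show "\<forall>e'\<in>inc E v. e' \<noteq> {u,v} \<longrightarrow> c2 e' \<noteq> \<beta>"
    proof (intro ballI impI)
      fix e' assume e': "e' \<in> inc E v" "e' \<noteq> {u,v}"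
      have n: "e' \<noteq> {u,u'}" using e' D by (auto simp: inc_iff)
      show "c2 e' \<noteq> \<beta>"
      proof (cases "e' = {v,w}")
        case True then show ?thesis using a\<beta> D unfolding c2_def c1_def by (simp add: doubleton_eq_iff)
      next
        case False
        have e'E: "e' \<in> E" and e'z: "v \<in> e'" using e' by (simp_all add: inc_iff)
        have "ce0 {v,w} \<noteq> ce0 e'" using inj0[OF B(1) B(10) e'E _ e'z] False D by (simp add: doubleton_eq_iff)
        then show ?thesis using False n unfolding c2_def c1_def \<beta>_def by simp
      qed
    qed
    show "u \<notin> {u,w} \<longrightarrow> cv u \<noteq> \<beta>" by simp
    show "v \<notin> {u,w} \<longrightarrow> cv v \<noteq> \<beta>" using cvb by simp
  qed
  have nz3: "\<forall>e\<in>E. c3 e \<noteq> 0"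
  proof
    fix e assume e: "e \<in> E"
    show "c3 e \<noteq> 0"
    proof (cases "e \<in> {{u,v},{u,u'},{v,w}}")
      case True then show ?thesis using a1 r\<beta> unfolding cd by auto
    next
      case False then show ?thesis using nz[OF e] unfolding cd by simp
    qed
  qed
  show ?thesis by (rule finish[OF g3 nz3])
qed

lemma case1:
  assumes a1: "\<alpha> \<in> {1..9}" and av: "\<forall>e\<in>inc E v. ce0 e \<noteq> \<alpha>" and acv: "cv v \<noteq> \<alpha>"
    and m1: "\<mu> \<in> {1..9}" and mS: "\<mu> \<notin> S'" and ma: "\<mu> \<noteq> \<alpha>"
  shows "total_colourable V E 9"
proof -
  note B = basic
  have D: "u \<noteq> v" "u \<noteq> u'" "u' \<noteq> v" using B u'v by auto
  have mu': "cv u' \<noteq> \<mu>" "\<And>e. e \<in> inc E u' \<Longrightarrow> e \<noteq> {u,u'} \<Longrightarrow> ce0 e \<noteq> \<mu>" using mS by auto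
  define c1 where "c1 = ce0({u,u'} := \<mu>)"
  define c2 where "c2 = c1({u,v} := \<alpha>)"
  have g1: "good V E cv c1 {u,w}" unfolding c1_def
  proof (rule col2[OF g0 m1])
    show "\<forall>e'\<in>inc E u. e' \<noteq> {u,u'} \<longrightarrow> ce0 e' \<noteq> \<mu>"
    proof (intro ballI impI)
      fix e' assume e': "e' \<in> inc E u" "e' \<noteq> {u,u'}"
      then have "e' = {u,v}" using inc_u by auto
      then show "ce0 e' \<noteq> \<mu>" using m1 by simp
    qed
    show "\<forall>e'\<in>inc E u'. e' \<noteq> {u,u'} \<longrightarrow> ce0 e' \<noteq> \<mu>" using mu'(2) by blast
    show "u \<notin> {u,w} \<longrightarrow> cv u \<noteq> \<mu>" by simp
    show "u' \<notin> {u,w} \<longrightarrow> cv u' \<noteq> \<mu>" using mu'(1) by simp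
  qed
  have g2: "good V E cv c2 {u,w}" unfolding c2_def
  proof (rule col2[OF g1 a1])
    show "\<forall>e'\<in>inc E u. e' \<noteq> {u,v} \<longrightarrow> c1 e' \<noteq> \<alpha>"
    proof (intro ballI impI)
      fix e' assume e': "e' \<in> inc E u" "e' \<noteq> {u,v}"
      then have "e' = {u,u'}" using inc_u by auto
      then show "c1 e' \<noteq> \<alpha>" using ma unfolding c1_def by simp
    qed
    show "\<forall>e'\<in>inc E v. e' \<noteq> {u,v} \<longrightarrow> c1 e' \<noteq> \<alpha>"
    proof (intro ballI impI)
      fix e' assume e': "e' \<in> inc E v" "e' \<noteq> {u,v}"
      have "e' \<noteq> {u,u'}" using e' D by (auto simp: inc_iff)
      moreover have "ce0 e' \<noteq> \<alpha>" using bspec[OF av e'(1)] .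
      ultimately show "c1 e' \<noteq> \<alpha>" unfolding c1_def by simp
    qed
    show "u \<notin> {u,w} \<longrightarrow> cv u \<noteq> \<alpha>" by simp
    show "v \<notin> {u,w} \<longrightarrow> cv v \<noteq> \<alpha>" using acv D B uw by simp
  qed
  have nz2: "\<forall>e\<in>E. c2 e \<noteq> 0"
  proof
    fix e assume e: "e \<in> E"
    show "c2 e \<noteq> 0"
    proof (cases "e \<in> {{u,v},{u,u'}}")
      case True then show ?thesis using a1 m1 unfolding c2_def c1_def by auto
    next
      case False then show ?thesis using nz[OF e] unfolding c2_def c1_def by simp
    qed
  qed
  show ?thesis by (rule finish[OF g2 nz2])
qed

end

lemma cins: "finite A \<Longrightarrow> card (insert a A) \<le> Suc (card A)"
  by (simp add: card_insert_if)

lemma card3: "card {a,b,c::'a} \<le> 3"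
  by (simp add: card_insert_if)

context cfg begin

lemma main_col: "total_colourable V E 9"
proof -
  note B = basic
  let ?S = "insert (cv v) (ce0 ` (inc E v - {{u,v}}))"
  have uvi: "{u,v} \<in> inc E v" using B by (simp add: inc_iff)
  have fiv: "finite (inc E v)" by (rule fin_inc[OF sg])
  have "card (inc E v) \<le> 8" using card_inc[OF sg, of v] deg B(1) by fastforce
  then have "card (inc E v - {{u,v}}) \<le> 7" using uvi fiv by (simp add: card_Diff_singleton)
  then have "card (ce0 ` (inc E v - {{u,v}})) \<le> 7" using card_image_le[of "inc E v - {{u,v}}" ce0] fiv by simp
  then have "card ?S < 9" using cins[of "ce0 ` (inc E v - {{u,v}})" "cv v"] fiv by simp
  moreover have "finite ?S" using fiv by simp
  ultimately obtain \<alpha> where a1: "\<alpha> \<in> {1..9}" and aS: "\<alpha> \<notin> ?S" using avoid by blast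
  have acv: "cv v \<noteq> \<alpha>" using aS by auto
  have av: "\<forall>e\<in>inc E v. ce0 e \<noteq> \<alpha>"
  proof
    fix e assume e: "e \<in> inc E v"
    show "ce0 e \<noteq> \<alpha>"
    proof (cases "e = {u,v}")
      case True then show ?thesis using a1 by simp
    next
      case False then have m: "ce0 e \<in> ?S" using e by blast
      show ?thesis
      proof
        assume "ce0 e = \<alpha>"
        then show False using m aS by simp
      qed
    qed
  qed
  have uu'i: "{u,u'} \<in> inc E u'" using B by (simp add: inc_iff)
  have fiu: "finite (inc E u')" by (rule fin_inc[OF sg])
  have "card (inc E u') \<le> 8" using card_inc[OF sg, of u'] deg B(4) by fastforce
  then have "card (inc E u' - {{u,u'}}) \<le> 7" using uu'i fiu by (simp add: card_Diff_singleton)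
  then have "card (ce0 ` (inc E u' - {{u,u'}})) \<le> 7" using card_image_le[of "inc E u' - {{u,u'}}" ce0] fiu by simp
  then have cS': "card S' < 9" using cins[of "ce0 ` (inc E u' - {{u,u'}})" "cv u'"] fiu by simp
  have fS': "finite S'" using fiu by simp
  show ?thesis
  proof (cases "\<exists>\<mu>. \<mu> \<in> {1..9} \<and> \<mu> \<notin> S' \<and> \<mu> \<noteq> \<alpha>")
    case True
    then obtain \<mu> where "\<mu> \<in> {1..9}" "\<mu> \<notin> S'" "\<mu> \<noteq> \<alpha>" by blast
    then show ?thesis using case1[OF a1 av acv] by blast
  next
    case False
    obtain \<mu> where "\<mu> \<in> {1..9}" "\<mu> \<notin> S'" using avoid[OF fS' cS'] by blast
    then have aS': "\<alpha> \<notin> S'" using False by blast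
    have u'w: "u' \<noteq> w"
    proof
      assume u'w: "u' = w"
      have "card (inc E u') \<le> 3" unfolding u'w inc_w by (rule card3)
      then have "card (ce0 ` (inc E u' - {{u,u'}})) \<le> 3"
        using card_image_le[of "inc E u' - {{u,u'}}" ce0] card_mono[OF fiu, of "inc E u' - {{u,u'}}"] fiu by fastforce
      then have "card S' \<le> 4" using cins[of "ce0 ` (inc E u' - {{u,u'}})" "cv u'"] fiu by simp
      then have "card (insert \<alpha> S') < 9" using cins[of S' \<alpha>] fS' by simp
      moreover have "finite (insert \<alpha> S')" using fS' by simp
      ultimately obtain \<nu> where "\<nu> \<in> {1..9}" "\<nu> \<notin> insert \<alpha> S'" using avoid by blast
      then show False using False by blast
    qed
    have nx: "u \<noteq> z" if "z \<in> {x,y}" for z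
    proof
      assume uz: "u = z"
      have "{w,z} \<in> E" using that B by auto
      then have "w \<in> neighbours V E u" using uz nb_edge[OF sg, of z w] by (simp add: insert_commute)
      then show False using Nu u'w B by auto
    qed
    have ux: "u \<noteq> x" and uy: "u \<noteq> y" using nx by auto
    show ?thesis
    proof (cases "ce0 {w,x} = \<alpha>")
      case True
      show ?thesis
      proof (cases "ce0 {v,x} = ce0 {w,y}")
        case True2: True
        show ?thesis by (rule case2c[OF a1 av acv aS' u'w ux uy True True2])
      next
        case False2: False
        show ?thesis by (rule case2b[OF a1 av acv aS' u'w ux uy True False2])
      qed
    next
      case F1: False
      show ?thesis
      proof (cases "ce0 {w,y} = \<alpha>")
        case True
        interpret sw: cfg V E v w y x u u' cv ce
          by unfold_locales (use sg deg Nw vx vy xy Nu u'v uw evx evy wV uV tc in \<open>auto simp: insert_commute\<close>)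
        show ?thesis
        proof (cases "ce0 {v,y} = ce0 {w,x}")
          case True2: True
          show ?thesis by (rule sw.case2c[OF a1 av acv aS' u'w uy ux True True2])
        next
          case False2: False
          show ?thesis by (rule sw.case2b[OF a1 av acv aS' u'w uy ux True False2])
        qed
      next
        case False
        show ?thesis by (rule case2a[OF a1 av acv aS' u'w F1 False])
      qed
    qed
  qed
qed

end

lemma tri_faces:
  assumes sg: "simple_graph V E" and rs: "rotation_system V E rot" and wV: "w \<in> V"
    and dw: "degree V E w = 3" and vw: "{v,w} \<in> E"
    and f1: "f1 \<in> faces V E rot" and f2: "f2 \<in> faces V E rot" and ne: "f1 \<noteq> f2"
    and c1: "card f1 = 3" and c2: "card f2 = 3"
    and e1: "edge_on_face v w f1" and e2: "edge_on_face v w f2"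
  shows "\<exists>x y. neighbours V E w = {v,x,y} \<and> v \<noteq> x \<and> v \<noteq> y \<and> x \<noteq> y \<and> {v,x} \<in> E \<and> {v,y} \<in> E"
proof -
  interpret O: fperm "darts V E" "face_step rot" by (rule fperm_fs[OF sg rs])
  let ?s = "face_step rot"
  have vV: "v \<in> V" and vnw: "v \<noteq> w" using edge_in_V[OF sg vw] by auto
  have dvw: "(v,w) \<in> darts V E" and dwv: "(w,v) \<in> darts V E"
    using vw vV wV vnw by (auto simp: darts_iff insert_commute)
  have key: "f = O.orb (v,w) \<or> f = O.orb (w,v)" if f: "f \<in> faces V E rot" "edge_on_face v w f" for f
  proof -
    obtain d where d: "d \<in> darts V E" "f = O.orb d" using f(1) unfolding faces_def face_orb[symmetric] by blast
    have "(v,w) \<in> O.orb d \<or> (w,v) \<in> O.orb d" using f(2) d(2) unfolding edge_on_face_def by simp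
    then show ?thesis using O.orb_same[OF d(1)] d(2) by metis
  qed
  have cards: "card (O.orb (v,w)) = 3" "card (O.orb (w,v)) = 3"
    using key[OF f1 e1] key[OF f2 e2] ne c1 c2 by auto
  have tri: "?s (?s (?s d)) = d" if "d \<in> darts V E" "card (O.orb d) = 3" for d
  proof -
    have "O.per d = 3" using O.card_orb[OF that(1)] that(2) by simp
    then have "(?s^^3) d = d" using O.per[OF that(1)] by simp
    then show ?thesis by (simp add: numeral_3_eq_3)
  qed
  define x where "x = rot w v"
  define y where "y = rot v w"
  have vNw: "v \<in> neighbours V E w" using nb_edge[OF sg, of w v] vw by (simp add: insert_commute)
  have wNv: "w \<in> neighbours V E v" using nb_edge[OF sg vw] .
  have xN: "x \<in> neighbours V E w" unfolding x_def by (rule rot_in[OF rs wV vNw])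
  have yN: "y \<in> neighbours V E v" unfolding y_def by (rule rot_in[OF rs vV wNv])
  have t1: "?s (?s (?s (v,w))) = (v,w)" using tri[OF dvw cards(1)] .
  have s2a: "?s (?s (v,w)) = (x, rot x w)" unfolding x_def by (simp add: face_step_def)
  have "?s (?s (v,w)) \<in> darts V E" using O.maps[OF O.maps[OF dvw]] .
  then have "(x, rot x w) \<in> darts V E" using s2a by simp
  moreover have "rot x w = v" using t1 s2a by (simp add: face_step_def)
  ultimately have xv: "{x,v} \<in> E" "x \<noteq> v" by (simp_all add: darts_iff)
  have t2: "?s (?s (?s (w,v))) = (w,v)" using tri[OF dwv cards(2)] .
  have s2b: "?s (?s (w,v)) = (y, rot y v)" unfolding y_def by (simp add: face_step_def)
  have r2: "rot y v = w" using t2 s2b by (simp add: face_step_def)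
  have "?s (?s (w,v)) \<in> darts V E" using O.maps[OF O.maps[OF dwv]] .
  then have "(y, w) \<in> darts V E" using s2b r2 by simp
  then have yNw: "y \<in> neighbours V E w" by (simp add: darts_nb)
  have rwy: "rot w y = v" using t2 s2b r2 by (simp add: face_step_def)
  have yv: "y \<noteq> v" using yN unfolding nb_iff by simp
  have xy: "x \<noteq> y"
  proof
    assume "x = y"
    then have "rot w v = x" "rot w x = v" using rwy unfolding x_def by simp_all
    then have "neighbours V E w \<subseteq> {v,x}" using rot_two[OF rs wV vNw] by blast
    then have "card (neighbours V E w) \<le> card {v,x}" by (rule card_mono[rotated]) simp
    also have "\<dots> \<le> 2" by (simp add: card_insert_if)
    finally show False using dw unfolding degree_def by simp
  qed
  have sub: "{v,x,y} \<subseteq> neighbours V E w" using vNw xN yNw by simp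
  have fN: "finite (neighbours V E w)" using sg_fin[OF sg] unfolding neighbours_def by simp
  have "card {v,x,y} = 3" using xv(2) yv xy by simp
  then have eqN: "{v,x,y} = neighbours V E w" using card_subset_eq[OF fN sub] dw unfolding degree_def by simp
  have "{v,y} \<in> E" using yN unfolding nb_iff by (simp add: insert_commute)
  then show ?thesis using eqN xv yv xy by (intro exI[of _ x] exI[of _ y]) (auto simp: insert_commute)
qed

theorem lemma2p7:
  fixes V :: "'a set" and E :: "'a set set" and rot :: "'a \<Rightarrow> 'a \<Rightarrow> 'a"
    and v w :: 'a and f1 f2 :: "('a \<times> 'a) set"
  assumes "minimal_counterexample V E"
    and "plane_rotation V E rot"
    and "v \<in> V" and "degree V E v = 8"
    and "w \<in> V" and "degree V E w = 3" and "{v, w} \<in> E"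
    and "f1 \<in> faces V E rot" and "f2 \<in> faces V E rot" and "f1 \<noteq> f2"
    and "card f1 = 3" and "card f2 = 3"
    and "edge_on_face v w f1" and "edge_on_face v w f2"
  shows "\<forall>u \<in> neighbours V E v. degree V E u \<noteq> 2"
proof
  fix u assume uN: "u \<in> neighbours V E v"
  show "degree V E u \<noteq> 2"
  proof
    assume du: "degree V E u = 2"
    have mc: "minimal_counterexample V E" by fact
    have sg: "simple_graph V E" and md: "max_degree_eq V E 8" and nc: "\<not> total_colourable V E 9"
      using mc unfolding minimal_counterexample_def by blast+
    have deg: "\<forall>z\<in>V. degree V E z \<le> 8" using md unfolding max_degree_eq_def max_degree_le_def by blast
    have rs: "rotation_system V E rot" using assms(2) unfolding plane_rotation_def by blast
    obtain x y where xy: "neighbours V E w = {v,x,y}" "v \<noteq> x" "v \<noteq> y" "x \<noteq> y" "{v,x} \<in> E" "{v,y} \<in> E"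
      using tri_faces[OF sg rs assms(5,6,7,8,9,10,11,12,13,14)] by blast
    have uV: "u \<in> V" and uvE: "{u,v} \<in> E" using uN unfolding nb_iff by simp_all
    have vNu: "v \<in> neighbours V E u" using nb_sym[OF sg uN] .
    have fNu: "finite (neighbours V E u)" using sg_fin[OF sg] unfolding neighbours_def by simp
    have "card (neighbours V E u - {v}) = 1" using du vNu fNu unfolding degree_def by (simp add: card_Diff_singleton)
    then obtain u' where u': "neighbours V E u - {v} = {u'}" by (rule card_1_singletonE)
    have Nu: "neighbours V E u = {v,u'}" using u' vNu by blast
    have u'v: "u' \<noteq> v" using u' by blast
    have uw: "u \<noteq> w" using du assms(6) by auto
    have "total_colourable V (E - {{u,v}}) 9" by (rule reduce_edge[OF mc uvE])
    then obtain cv ce where tc: "total_colouring V (E - {{u,v}}) 9 cv ce" unfolding total_colourable_def by blast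
    interpret cfg V E v w x y u u' cv ce
      by unfold_locales (use sg deg xy Nu u'v uw assms(5) uV tc in auto)
    show False using main_col nc by blast
  qed
qed

end
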